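(* Let $H=(v_1,\dots,v_6)$ be an embedded equilateral hexagon in standard position whose action-angle coordinates $(d_1,d_2,d_3,\theta_1,\theta_2,\theta_3)$ for the $T_{135}$ triangulation are defined, and let $d=\sqrt{2d_1^2d_2^2+2d_1^2d_3^2+2d_2^2d_3^2-d_1^4-d_2^4-d_3^4}$. If $J(H)=(1,1)$, then the following nine quantities are all positive: \begin{align*} f_1= & d_2\sqrt{4-d_2^2}\sin\theta_2\big(d_3d-(d_1^2-d_2^2+d_3^2)\sqrt{4-d_3^2}\cos\theta_3\big)- d_3\sqrt{4-d_3^2}\sin\theta_3\big(d_2d-(d_1^2+d_2^2-d_3^2)\sqrt{4-d_2^2}\cos\theta_2\big),\\ g_1= & \sqrt{4-d_2^2}\Big(\tfrac{-d_1^2+d_2^2+d_3^2}{2d_2 d_3}\cos\theta_2\sin\theta_3+\sin\theta_2\cos\theta_3\Big)-\tfrac{d\sin\theta_3}{2d_3},\\ h_1= & \sqrt{4-d_3^2}\Big(\tfrac{-d_1^2+d_2^2+d_3^2}{2d_2 d_3}\cos\theta_3\sin\theta_2+\sin\theta_3\cos\theta_2\Big)-\tfrac{d\sin\theta_2}{2d_2},\\ f_2 = & d_3\sqrt{4-d_3^2}\sin\theta_3\big(d_1d-(d_1^2+d_2^2-d_3^2)\sqrt{4-d_1^2}\cos\theta_1\big)- d_1\sqrt{4-d_1^2}\sin\theta_1\big(d_3d-(-d_1^2+d_2^2+d_3^2)\sqrt{4-d_3^2}\cos\theta_3\big),\\ g_2 = &\sqrt{4-d_3^2}\Big(\tfrac{d_1^2-d_2^2+d_3^2}{2d_1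 d_3}\cos\theta_3\sin\theta_1+\sin\theta_3\cos\theta_1\Big)-\tfrac{d\sin\theta_1}{2d_1},\\ h_2 = &\sqrt{4-d_1^2}\Big(\tfrac{d_1^2-d_2^2+d_3^2}{2d_1 d_3}\cos\theta_1\sin\theta_3+\sin\theta_1\cos\theta_3\Big)-\tfrac{d\sin\theta_3}{2d_3},\\ f_3 = & d_1\sqrt{4-d_1^2}\sin\theta_1\big(d_2d-(-d_1^2+d_2^2+d_3^2)\sqrt{4-d_2^2}\cos\theta_2\big)-d_2\sqrt{4-d_2^2}\sin\theta_2\big(d_1d-(d_1^2-d_2^2+d_3^2)\sqrt{4-d_1^2}\cos\theta_1\big),\\ g_3 = &\sqrt{4-d_1^2}\Big(\tfrac{d_1^2+d_2^2-d_3^2}{2d_1 d_2}\cos\theta_1\sin\theta_2+\sin\theta_1\cos\theta_2\Big)-\tfrac{d\sin\theta_2}{2d_2},\\ h_3 = &\sqrt{4-d_2^2}\Big( \tfrac{d_1^2+d_2^2-d_3^2}{2d_1 d_2}\cos\theta_2\sin\theta_1+\sin\theta_2\cos\theta_1\Big)-\tfrac{d\sin\theta_1}{2d_1}. \end{align*}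
   Context: An equilateral hexagon is an ordered 6-tuple $H=(v_1,\dots,v_6)$ in $\mathbb{R}^3$ with $\|v_i-v_{i+1}\|=1$ (indices mod 6), edges $e_i=[v_i,v_{i+1}]$, oriented $v_1\to v_2\to\cdots\to v_6\to v_1$; embedded means non-adjacent edges are disjoint and adjacent ones meet only at their common endpoint. Standard position: $v_1=0$, $v_3$ on the positive $x$-axis, $v_5$ in the $xy$-plane with positive $y$-coordinate. Action-angle coordinates ($T_{135}$ triangulation), defined when $v_1,v_3,v_5$ are not collinear and $0<d_i<2$: $d_1=\|v_3-v_1\|$, $d_2=\|v_5-v_3\|$, $d_3=\|v_1-v_5\|$; with $m_1,m_2,m_3$ the midpoints of $[v_1,v_3],[v_3,v_5],[v_5,v_1]$, $u_1,u_2,u_3$ the unit vectors in the $xy$-plane perpendicular to these segments pointing toward the opposite vertex of triangle $v_1v_3v_5$ (toward $v_5,v_1,v_3$ respectively), and $e_z=(0,0,1)$, the angles $\theta_i\in[0,2\pi)$ are determined by $v_{2i}=m_i+\tfrac12\sqrt{4-d_i^2}(\cos\theta_i\,u_i+\sin\theta_i\,e_z)$ (regular planar hexagon: all $\theta_i=\pi$). Explicitly $v_3=(d_1,0,0)$, $v_5=\big(\tfrac{d_1^2-d_2^2+d_3^2}{2d_1},\tfrac{d}{2d_1},0\big)$, $v_2=\big(\tfrac{d_1}{2},\tfrac12\sqrt{4-d_1^2}\cos\theta_1,\tfrac12\sqrt{4-d_1^2}\sin\theta_1\big)$. Joint Chirality-Curl: $curl(H)=\operatorname{sign}\big((v_3-v_1)\times(v_5-v_1)\cdot(v_2-v_1)\big)$.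 For $i=2,4,6$, $T_i$ is the open triangular disk with vertices $v_{i-1},v_i,v_{i+1}$, oriented by the right-hand rule (normal $(v_i-v_{i-1})\times(v_{i+1}-v_i)$), and $\Delta_i$ is the algebraic intersection number of $T_i$ with the oriented polygon $H$. Then $J(H)=(\Delta_2\Delta_4\Delta_6,\ \Delta_2^2\Delta_4^2\Delta_6^2\,curl(H))$. *)

theory Defs
  imports "HOL-Analysis.Analysis"
begin

text \<open>A hexagon is given by H :: nat => real^3 with v_k = H k for k = 1..6.
  cv H i is the vertex with cyclic index i (indices taken mod 6 into 1..6).\<close>

definition cv :: "(nat \<Rightarrow> real^3) \<Rightarrow> nat \<Rightarrow> real^3" where
  "cv H i = H (Suc ((i + 5) mod 6))"

definition hex_edge :: "(nat \<Rightarrow> real^3) \<Rightarrow> nat \<Rightarrow> (real^3) set" where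
  "hex_edge H i = closed_segment (cv H i) (cv H (i + 1))"

definition equilateral_hex :: "(nat \<Rightarrow> real^3) \<Rightarrow> bool" where
  "equilateral_hex H \<longleftrightarrow> (\<forall>i\<in>{1..6}. dist (cv H i) (cv H (i + 1)) = 1)"

definition embedded_hex :: "(nat \<Rightarrow> real^3) \<Rightarrow> bool" where
  "embedded_hex H \<longleftrightarrow>
     (\<forall>i\<in>{1..6}. hex_edge H i \<inter> hex_edge H (i + 1) = {cv H (i + 1)}
        \<and> (\<forall>j\<in>{i+2..i+4}. hex_edge H i \<inter> hex_edge H j = {}))"

definition standard_position :: "(nat \<Rightarrow> real^3) \<Rightarrow> bool" where
  "standard_position H \<longleftrightarrow>
     H 1 = 0 \<and> H 3 $ 1 > 0 \<and> H 3 $ 2 = 0 \<and> H 3 $ 3 = 0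
     \<and> H 5 $ 3 = 0 \<and> H 5 $ 2 > 0"

definition perp_toward :: "real^3 \<Rightarrow> real^3 \<Rightarrow> real^3 \<Rightarrow> real^3" where
  "perp_toward a b c =
     (let w = c - a; p = w - ((w \<bullet> (b - a)) / ((b - a) \<bullet> (b - a))) *\<^sub>R (b - a)
      in (1 / norm p) *\<^sub>R p)"

definition e_z :: "real^3" where
  "e_z = (\<chi> i. if i = 3 then 1 else 0)"

definition action_angle :: "(nat \<Rightarrow> real^3) \<Rightarrow> real \<Rightarrow> real \<Rightarrow> real \<Rightarrow> real \<Rightarrow> real \<Rightarrow> real \<Rightarrow> bool" where
  "action_angle H d1 d2 d3 t1 t2 t3 \<longleftrightarrow>
     \<not> collinear {H 1, H 3, H 5} \<and>
     d1 = dist (H 3) (H 1) \<and> d2 = dist (H 5) (H 3) \<and> d3 = dist (H 1) (H 5) \<and>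
     0 < d1 \<and> d1 < 2 \<and> 0 < d2 \<and> d2 < 2 \<and> 0 < d3 \<and> d3 < 2 \<and>
     t1 \<in> {0..<2*pi} \<and> t2 \<in> {0..<2*pi} \<and> t3 \<in> {0..<2*pi} \<and>
     H 2 = midpoint (H 1) (H 3) + (sqrt (4 - d1\<^sup>2) / 2) *\<^sub>R
             (cos t1 *\<^sub>R perp_toward (H 1) (H 3) (H 5) + sin t1 *\<^sub>R e_z) \<and>
     H 4 = midpoint (H 3) (H 5) + (sqrt (4 - d2\<^sup>2) / 2) *\<^sub>R
             (cos t2 *\<^sub>R perp_toward (H 3) (H 5) (H 1) + sin t2 *\<^sub>R e_z) \<and>
     H 6 = midpoint (H 5) (H 1) + (sqrt (4 - d3\<^sup>2) / 2) *\<^sub>R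
             (cos t3 *\<^sub>R perp_toward (H 5) (H 1) (H 3) + sin t3 *\<^sub>R e_z)"

definition hex_curl :: "(nat \<Rightarrow> real^3) \<Rightarrow> real" where
  "hex_curl H = sgn (cross3 (H 3 - H 1) (H 5 - H 1) \<bullet> (H 2 - H 1))"

definition open_tri :: "real^3 \<Rightarrow> real^3 \<Rightarrow> real^3 \<Rightarrow> (real^3) set" where
  "open_tri p q r = {a *\<^sub>R p + b *\<^sub>R q + c *\<^sub>R r | a b c.
        0 < a \<and> 0 < b \<and> 0 < c \<and> a + b + c = 1}"

text \<open>Transversal crossings in the interior of the edge count sgn(n.dir);
  a crossing exactly at an endpoint of the edge counts half (so the two edges through
  a vertex lying in T_i together contribute the local intersection index).\<close>
definition edge_tri_int :: "(nat \<Rightarrow> real^3) \<Rightarrow> nat \<Rightarrow> nat \<Rightarrow> real" where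
  "edge_tri_int H i j =
     (let p = cv H (i + 5); q = cv H i; r = cv H (i + 1);
          n = cross3 (q - p) (r - q);
          a = cv H j; dir = cv H (j + 1) - cv H j
      in if n \<bullet> dir = 0 then 0 else
         (let t = (n \<bullet> (q - a)) / (n \<bullet> dir); x = a + t *\<^sub>R dir in
          if x \<in> open_tri p q r \<and> 0 < t \<and> t < 1 then sgn (n \<bullet> dir)
          else if x \<in> open_tri p q r \<and> (t = 0 \<or> t = 1) then sgn (n \<bullet> dir) / 2
          else 0))"

definition Delta :: "(nat \<Rightarrow> real^3) \<Rightarrow> nat \<Rightarrow> real" where
  "Delta H i = (\<Sum>j\<in>{1..6}. edge_tri_int H i j)"

definition joint_cc :: "(nat \<Rightarrow> real^3) \<Rightarrow> real \<times> real" where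
  "joint_cc H = (Delta H 2 * Delta H 4 * Delta H 6,
                 (Delta H 2)\<^sup>2 * (Delta H 4)\<^sup>2 * (Delta H 6)\<^sup>2 * hex_curl H)"

end

theory Submission
  imports Defs
begin

definition det4 :: "real^3 \<Rightarrow> real^3 \<Rightarrow> real^3 \<Rightarrow> real^3 \<Rightarrow> real" where
  "det4 a b c d = cross3 (b - a) (c - a) \<bullet> (d - a)"

lemma det4_expand: "det4 a b c d =
   (b$1-a$1)*((c$2-a$2)*(d$3-a$3) - (c$3-a$3)*(d$2-a$2))
 - (b$2-a$2)*((c$1-a$1)*(d$3-a$3) - (c$3-a$3)*(d$1-a$1))
 + (b$3-a$3)*((c$1-a$1)*(d$2-a$2) - (c$2-a$2)*(d$1-a$1))"
  unfolding det4_def by (simp add: cross3_simps)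

lemma N_dot: "cross3 (q - p) (r - q) \<bullet> (x - y) = det4 p q r x - det4 p q r y"
  unfolding det4_expand by (simp add: cross3_simps)

lemma bary_cross:
  fixes p q r x :: "real^3"
  assumes "x = a *\<^sub>R p + b *\<^sub>R q + c *\<^sub>R r" "a + b + c = 1"
  shows "cross3 (q - x) (r - x) = a *\<^sub>R cross3 (q - p) (r - q)"
    "cross3 (r - x) (p - x) = b *\<^sub>R cross3 (q - p) (r - q)"
proof -
  have c: "c = 1 - a - b" using assms(2) by simp
  show "cross3 (q - x) (r - x) = a *\<^sub>R cross3 (q - p) (r - q)"
    unfolding assms(1) c by (simp add: cross3_simps)
  show "cross3 (r - x) (p - x) = b *\<^sub>R cross3 (q - p) (r - q)"
    unfolding assms(1) c by (simp add: cross3_simps)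
qed

lemma vert_not_open:
  assumes "cross3 (q - p) (r - q) \<noteq> 0"
  shows "p \<notin> open_tri p q r" "q \<notin> open_tri p q r" "r \<notin> open_tri p q r"
proof -
  { fix x assume "x \<in> open_tri p q r"
    then obtain a b c where abc: "x = a *\<^sub>R p + b *\<^sub>R q + c *\<^sub>R r" "0<a" "0<b" "0<c" "a+b+c=1"
      unfolding open_tri_def by blast
    have "cross3 (q - x) (r - x) \<noteq> 0" "cross3 (r - x) (p - x) \<noteq> 0"
      using bary_cross[OF abc(1) abc(5)] abc assms by auto
    hence "x \<noteq> p \<and> x \<noteq> q \<and> x \<noteq> r" by (auto simp: cross_zero_left cross_zero_right)
  }
  thus "p \<notin> open_tri p q r" "q \<notin> open_tri p q r" "r \<notin> open_tri p q r" by blast+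
qed

lemma det4_bary:
  assumes "x = a *\<^sub>R p + b *\<^sub>R q + c *\<^sub>R r" "a + b + c = 1"
  shows "det4 s x p q = c * det4 s r p q" "det4 s x q r = a * det4 s p q r" "det4 s x r p = b * det4 s q r p"
proof -
  have c: "c = 1 - a - b" using assms(2) by simp
  show "det4 s x p q = c * det4 s r p q" "det4 s x q r = a * det4 s p q r" "det4 s x r p = b * det4 s q r p"
    unfolding assms(1) c det4_expand by (simp_all add: algebra_simps)
qed

lemma det4_line:
  "det4 s (s + t *\<^sub>R (e - s)) y z = t * det4 s e y z"
  unfolding det4_expand by (simp add: algebra_simps)

lemma det4_perm1: "det4 s r p q = - det4 p q r s" "det4 s p q r = - det4 p q r s" "det4 s q r p = - det4 p q r s"
  unfolding det4_expand by (simp_all add: algebra_simps)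

definition eti :: "real^3 \<Rightarrow> real^3 \<Rightarrow> real^3 \<Rightarrow> real^3 \<Rightarrow> real^3 \<Rightarrow> real" where
  "eti p q r a b =
     (let n = cross3 (q - p) (r - q); dir = b - a
      in if n \<bullet> dir = 0 then 0 else
         (let t = (n \<bullet> (q - a)) / (n \<bullet> dir); x = a + t *\<^sub>R dir in
          if x \<in> open_tri p q r \<and> 0 < t \<and> t < 1 then sgn (n \<bullet> dir)
          else if x \<in> open_tri p q r \<and> (t = 0 \<or> t = 1) then sgn (n \<bullet> dir) / 2
          else 0))"

lemma det4_self: "det4 p q r q = 0" "det4 p q r p = 0" "det4 p q r r = 0"
  unfolding det4_expand by (simp_all add: algebra_simps)

lemma sgn_mult_pos: "(0::real) < k \<Longrightarrow> sgn (k * x) = sgn x"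
  by (simp add: sgn_mult)

lemma eti_cases:
  fixes p q r s e :: "real^3"
  defines "Ds \<equiv> det4 p q r s" and "De \<equiv> det4 p q r e"
  shows "eti p q r s e = 0
    \<or> (Ds = 0 \<and> De \<noteq> 0 \<and> eti p q r s e = sgn De / 2)
    \<or> (De = 0 \<and> Ds \<noteq> 0 \<and> eti p q r s e = - sgn Ds / 2)
    \<or> (Ds * De < 0 \<and> eti p q r s e = sgn De \<and> sgn (det4 s e p q) = sgn De
        \<and> sgn (det4 s e q r) = sgn De \<and> sgn (det4 s e r p) = sgn De)"
proof -
  define n where "n = cross3 (q - p) (r - q)"
  have nd: "n \<bullet> (e - s) = De - Ds" unfolding n_def Ds_def De_def by (rule N_dot)
  have nq: "n \<bullet> (q - s) = - Ds" unfolding n_def Ds_def using N_dot[of q p r q s] det4_self by simp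
  define t where "t = - Ds / (De - Ds)"
  define x where "x = s + t *\<^sub>R (e - s)"
  show ?thesis
  proof (cases "De - Ds = 0")
    case True
    then show ?thesis unfolding eti_def Let_def n_def[symmetric] nd by simp
  next
    case False
    have E: "eti p q r s e = (if x \<in> open_tri p q r \<and> 0 < t \<and> t < 1 then sgn (De - Ds)
          else if x \<in> open_tri p q r \<and> (t = 0 \<or> t = 1) then sgn (De - Ds) / 2 else 0)"
      unfolding eti_def Let_def n_def[symmetric] nd nq t_def x_def using False by simp
    show ?thesis
    proof (cases "x \<in> open_tri p q r \<and> 0 < t \<and> t < 1")
      case True
      then obtain a b c where abc: "x = a *\<^sub>R p + b *\<^sub>R q + c *\<^sub>R r" "0<a" "0<b" "0<c" "a+b+c=1"
        unfolding open_tri_def by blast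
      have t01: "0 < t" "t < 1" using True by auto
      have opp: "Ds * De < 0"
      proof (cases "De - Ds > 0")
        case True
        then have "0 < - Ds" "- Ds < De - Ds" using t01 unfolding t_def
          by (simp_all add: divide_simps)
        then show ?thesis by (simp add: mult_neg_pos)
      next
        case F: False
        then have "De - Ds < 0" using False by simp
        then have "0 > - Ds" "- Ds > De - Ds" using t01 unfolding t_def
          by (simp_all add: divide_simps)
        then show ?thesis by (simp add: mult_pos_neg)
      qed
      have sgnDe: "sgn (De - Ds) = sgn De" "sgn De = - sgn Ds"
        using opp by (auto simp: sgn_if mult_less_0_iff)
      have l1: "t * det4 s e p q = c * (- Ds)"
        using det4_line[of s t e p q] det4_bary(1)[OF abc(1) abc(5), of s] det4_perm1(1)[of s r p q]
        unfolding x_def[symmetric] Ds_def by simp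
      have l2: "t * det4 s e q r = a * (- Ds)"
        using det4_line[of s t e q r] det4_bary(2)[OF abc(1) abc(5), of s] det4_perm1(2)[of s p q r]
        unfolding x_def[symmetric] Ds_def by simp
      have l3: "t * det4 s e r p = b * (- Ds)"
        using det4_line[of s t e r p] det4_bary(3)[OF abc(1) abc(5), of s] det4_perm1(3)[of s q r p]
        unfolding x_def[symmetric] Ds_def by simp
      have "sgn (det4 s e p q) = sgn (- Ds)"
        using l1 sgn_mult_pos[OF t01(1), of "det4 s e p q"] sgn_mult_pos[OF abc(4), of "-Ds"] by simp
      moreover have "sgn (det4 s e q r) = sgn (- Ds)"
        using l2 sgn_mult_pos[OF t01(1), of "det4 s e q r"] sgn_mult_pos[OF abc(2), of "-Ds"] by simp
      moreover have "sgn (det4 s e r p) = sgn (- Ds)"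
        using l3 sgn_mult_pos[OF t01(1), of "det4 s e r p"] sgn_mult_pos[OF abc(3), of "-Ds"] by simp
      ultimately show ?thesis using E True opp sgnDe by (simp add: sgn_minus)
    next
      case NT: False
      show ?thesis
      proof (cases "x \<in> open_tri p q r \<and> (t = 0 \<or> t = 1)")
        case True
        then have "t = 0 \<or> t = 1" by simp
        then show ?thesis
        proof
          assume "t = 0"
          moreover from this have "Ds = 0" unfolding t_def using False by (simp add: divide_simps)
          ultimately show ?thesis using E NT True False by simp
        next
          assume "t = 1"
          moreover from this have "De = 0" unfolding t_def using False by (simp add: divide_simps)
          ultimately show ?thesis using E NT True False by (simp add: sgn_minus)
        qed
      next
        case False
        then show ?thesis using E NT by (simp only: if_False if_not_P) simp
      qed
    qed
  qed
qed

lemma eti_pq: "eti p q r p q = 0" and eti_qr: "eti p q r q r = 0"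
  unfolding eti_def Let_def by (simp_all add: dot_cross_self cross3_simps)

lemma eti_r:
  assumes "cross3 (q - p) (r - q) \<noteq> 0"
  shows "eti p q r r u = 0"
proof -
  have "cross3 (q - p) (r - q) \<bullet> (q - r) = 0"
    by (simp add: cross3_simps)
  then show ?thesis using vert_not_open(3)[OF assms] unfolding eti_def Let_def by simp
qed

lemma eti_p:
  assumes "cross3 (q - p) (r - q) \<noteq> 0"
  shows "eti p q r w p = 0"
proof -
  define n where "n = cross3 (q - p) (r - q)"
  have "n \<bullet> (q - w) = n \<bullet> (p - w)"
    unfolding n_def by (simp add: cross3_simps)
  then show ?thesis using vert_not_open(1)[OF assms] unfolding eti_def Let_def n_def[symmetric]
    by auto
qed

lemma tri_lemma:
  fixes p q r u m w :: "real^3"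
  assumes N: "cross3 (q - p) (r - q) \<noteq> 0"
  defines "S \<equiv> eti p q r p q + eti p q r q r + eti p q r r u + eti p q r u m + eti p q r m w + eti p q r w p"
  defines "Du \<equiv> det4 p q r u" and "Dm \<equiv> det4 p q r m" and "Dw \<equiv> det4 p q r w"
  shows "\<bar>S\<bar> \<le> 1 \<and> (\<bar>S\<bar> = 1 \<longrightarrow>
     (Dm > 0 \<and> S = 1 \<and> Du < 0 \<and> det4 u m p q > 0 \<and> det4 u m q r > 0 \<and> det4 u m r p > 0)
   \<or> (Dm < 0 \<and> S = -1 \<and> Du > 0 \<and> det4 u m p q < 0 \<and> det4 u m q r < 0 \<and> det4 u m r p < 0)
   \<or> (Dm > 0 \<and> S = -1 \<and> Dw < 0 \<and> det4 m w p q < 0 \<and> det4 m w q r < 0 \<and> det4 m w r p < 0)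
   \<or> (Dm < 0 \<and> S = 1 \<and> Dw > 0 \<and> det4 m w p q > 0 \<and> det4 m w q r > 0 \<and> det4 m w r p > 0)
   \<or> (Dm = 0 \<and> S = 1 \<and> Du < 0 \<and> Dw > 0)
   \<or> (Dm = 0 \<and> S = -1 \<and> Du > 0 \<and> Dw < 0))"
proof -
  have S: "S = eti p q r u m + eti p q r m w"
    unfolding S_def eti_pq eti_qr eti_r[OF N] eti_p[OF N] by simp
  have c1: "eti p q r u m = 0
    \<or> (Du = 0 \<and> Dm \<noteq> 0 \<and> eti p q r u m = sgn Dm / 2)
    \<or> (Dm = 0 \<and> Du \<noteq> 0 \<and> eti p q r u m = - sgn Du / 2)
    \<or> (Du * Dm < 0 \<and> eti p q r u m = sgn Dm \<and> sgn (det4 u m p q) = sgn Dm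
        \<and> sgn (det4 u m q r) = sgn Dm \<and> sgn (det4 u m r p) = sgn Dm)"
    unfolding Du_def Dm_def by (rule eti_cases)
  have c2: "eti p q r m w = 0
    \<or> (Dm = 0 \<and> Dw \<noteq> 0 \<and> eti p q r m w = sgn Dw / 2)
    \<or> (Dw = 0 \<and> Dm \<noteq> 0 \<and> eti p q r m w = - sgn Dm / 2)
    \<or> (Dm * Dw < 0 \<and> eti p q r m w = sgn Dw \<and> sgn (det4 m w p q) = sgn Dw
        \<and> sgn (det4 m w q r) = sgn Dw \<and> sgn (det4 m w r p) = sgn Dw)"
    unfolding Dw_def Dm_def by (rule eti_cases)
  show ?thesis unfolding S using c1 c2
    by (auto simp: sgn_if mult_less_0_iff split: if_splits)
qed

lemma abs_prod3:
  fixes x y z :: real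
  assumes "\<bar>x\<bar> \<le> 1" "\<bar>y\<bar> \<le> 1" "\<bar>z\<bar> \<le> 1" "x * y * z = 1"
  shows "\<bar>x\<bar> = 1 \<and> \<bar>y\<bar> = 1 \<and> \<bar>z\<bar> = 1"
proof -
  have a: "\<bar>x\<bar> * \<bar>y\<bar> * \<bar>z\<bar> = 1" using assms(4) by (metis abs_mult abs_one)
  have yz: "\<bar>y\<bar> * \<bar>z\<bar> \<le> 1" using assms(2,3) by (simp add: mult_le_one)
  have xz: "\<bar>x\<bar> * \<bar>z\<bar> \<le> 1" using assms(1,3) by (simp add: mult_le_one)
  have xy: "\<bar>x\<bar> * \<bar>y\<bar> \<le> 1" using assms(1,2) by (simp add: mult_le_one)
  have "\<bar>x\<bar> \<ge> 1"
  proof -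
    have "1 = \<bar>x\<bar> * (\<bar>y\<bar> * \<bar>z\<bar>)" using a by (simp add: mult.assoc)
    also have "\<dots> \<le> \<bar>x\<bar> * 1" using yz by (intro mult_left_mono) auto
    finally show ?thesis by simp
  qed
  moreover have "\<bar>y\<bar> \<ge> 1"
  proof -
    have "1 = \<bar>y\<bar> * (\<bar>x\<bar> * \<bar>z\<bar>)" using a by (simp add: ac_simps)
    also have "\<dots> \<le> \<bar>y\<bar> * 1" using xz by (intro mult_left_mono) auto
    finally show ?thesis by simp
  qed
  moreover have "\<bar>z\<bar> \<ge> 1"
  proof -
    have "1 = \<bar>z\<bar> * (\<bar>x\<bar> * \<bar>y\<bar>)" using a by (simp add: ac_simps)
    also have "\<dots> \<le> \<bar>z\<bar> * 1" using xy by (intro mult_left_mono) auto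
    finally show ?thesis by simp
  qed
  ultimately show ?thesis using assms(1-3) by auto
qed

lemma combine:
  fixes H :: "nat \<Rightarrow> real^3" and S2 S4 S6 :: real
  assumes T2: "\<bar>S2\<bar> \<le> 1 \<and> (\<bar>S2\<bar> = 1 \<longrightarrow>
     (det4 (H 1) (H 2) (H 3) (H 5) > 0 \<and> S2 = 1 \<and> det4 (H 1) (H 2) (H 3) (H 4) < 0 \<and> det4 (H 4) (H 5) (H 1) (H 2) > 0 \<and> det4 (H 4) (H 5) (H 2) (H 3) > 0 \<and> det4 (H 4) (H 5) (H 3) (H 1) > 0)
   \<or> (det4 (H 1) (H 2) (H 3) (H 5) < 0 \<and> S2 = -1 \<and> det4 (H 1) (H 2) (H 3) (H 4) > 0 \<and> det4 (H 4) (H 5) (H 1) (H 2) < 0 \<and> det4 (H 4) (H 5) (H 2) (H 3) < 0 \<and> det4 (H 4) (H 5) (H 3) (H 1) < 0)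
   \<or> (det4 (H 1) (H 2) (H 3) (H 5) > 0 \<and> S2 = -1 \<and> det4 (H 1) (H 2) (H 3) (H 6) < 0 \<and> det4 (H 5) (H 6) (H 1) (H 2) < 0 \<and> det4 (H 5) (H 6) (H 2) (H 3) < 0 \<and> det4 (H 5) (H 6) (H 3) (H 1) < 0)
   \<or> (det4 (H 1) (H 2) (H 3) (H 5) < 0 \<and> S2 = 1 \<and> det4 (H 1) (H 2) (H 3) (H 6) > 0 \<and> det4 (H 5) (H 6) (H 1) (H 2) > 0 \<and> det4 (H 5) (H 6) (H 2) (H 3) > 0 \<and> det4 (H 5) (H 6) (H 3) (H 1) > 0)
   \<or> (det4 (H 1) (H 2) (H 3) (H 5) = 0 \<and> S2 = 1 \<and> det4 (H 1) (H 2) (H 3) (H 4) < 0 \<and> det4 (H 1) (H 2) (H 3) (H 6) > 0)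
   \<or> (det4 (H 1) (H 2) (H 3) (H 5) = 0 \<and> S2 = -1 \<and> det4 (H 1) (H 2) (H 3) (H 4) > 0 \<and> det4 (H 1) (H 2) (H 3) (H 6) < 0))"
  and T4: "\<bar>S4\<bar> \<le> 1 \<and> (\<bar>S4\<bar> = 1 \<longrightarrow>
     (det4 (H 3) (H 4) (H 5) (H 1) > 0 \<and> S4 = 1 \<and> det4 (H 3) (H 4) (H 5) (H 6) < 0 \<and> det4 (H 6) (H 1) (H 3) (H 4) > 0 \<and> det4 (H 6) (H 1) (H 4) (H 5) > 0 \<and> det4 (H 6) (H 1) (H 5) (H 3) > 0)
   \<or> (det4 (H 3) (H 4) (H 5) (H 1) < 0 \<and> S4 = -1 \<and> det4 (H 3) (H 4) (H 5) (H 6) > 0 \<and> det4 (H 6) (H 1) (H 3) (H 4) < 0 \<and> det4 (H 6) (H 1) (H 4) (H 5) < 0 \<and> det4 (H 6) (H 1) (H 5) (H 3) < 0)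
   \<or> (det4 (H 3) (H 4) (H 5) (H 1) > 0 \<and> S4 = -1 \<and> det4 (H 3) (H 4) (H 5) (H 2) < 0 \<and> det4 (H 1) (H 2) (H 3) (H 4) < 0 \<and> det4 (H 1) (H 2) (H 4) (H 5) < 0 \<and> det4 (H 1) (H 2) (H 5) (H 3) < 0)
   \<or> (det4 (H 3) (H 4) (H 5) (H 1) < 0 \<and> S4 = 1 \<and> det4 (H 3) (H 4) (H 5) (H 2) > 0 \<and> det4 (H 1) (H 2) (H 3) (H 4) > 0 \<and> det4 (H 1) (H 2) (H 4) (H 5) > 0 \<and> det4 (H 1) (H 2) (H 5) (H 3) > 0)
   \<or> (det4 (H 3) (H 4) (H 5) (H 1) = 0 \<and> S4 = 1 \<and> det4 (H 3) (H 4) (H 5) (H 6) < 0 \<and> det4 (H 3) (H 4) (H 5) (H 2) > 0)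
   \<or> (det4 (H 3) (H 4) (H 5) (H 1) = 0 \<and> S4 = -1 \<and> det4 (H 3) (H 4) (H 5) (H 6) > 0 \<and> det4 (H 3) (H 4) (H 5) (H 2) < 0))"
  and T6: "\<bar>S6\<bar> \<le> 1 \<and> (\<bar>S6\<bar> = 1 \<longrightarrow>
     (det4 (H 5) (H 6) (H 1) (H 3) > 0 \<and> S6 = 1 \<and> det4 (H 5) (H 6) (H 1) (H 2) < 0 \<and> det4 (H 2) (H 3) (H 5) (H 6) > 0 \<and> det4 (H 2) (H 3) (H 6) (H 1) > 0 \<and> det4 (H 2) (H 3) (H 1) (H 5) > 0)
   \<or> (det4 (H 5) (H 6) (H 1) (H 3) < 0 \<and> S6 = -1 \<and> det4 (H 5) (H 6) (H 1) (H 2) > 0 \<and> det4 (H 2) (H 3) (H 5) (H 6) < 0 \<and> det4 (H 2) (H 3) (H 6) (H 1) < 0 \<and> det4 (H 2) (H 3) (H 1) (H 5) < 0)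
   \<or> (det4 (H 5) (H 6) (H 1) (H 3) > 0 \<and> S6 = -1 \<and> det4 (H 5) (H 6) (H 1) (H 4) < 0 \<and> det4 (H 3) (H 4) (H 5) (H 6) < 0 \<and> det4 (H 3) (H 4) (H 6) (H 1) < 0 \<and> det4 (H 3) (H 4) (H 1) (H 5) < 0)
   \<or> (det4 (H 5) (H 6) (H 1) (H 3) < 0 \<and> S6 = 1 \<and> det4 (H 5) (H 6) (H 1) (H 4) > 0 \<and> det4 (H 3) (H 4) (H 5) (H 6) > 0 \<and> det4 (H 3) (H 4) (H 6) (H 1) > 0 \<and> det4 (H 3) (H 4) (H 1) (H 5) > 0)
   \<or> (det4 (H 5) (H 6) (H 1) (H 3) = 0 \<and> S6 = 1 \<and> det4 (H 5) (H 6) (H 1) (H 2) < 0 \<and> det4 (H 5) (H 6) (H 1) (H 4) > 0)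
   \<or> (det4 (H 5) (H 6) (H 1) (H 3) = 0 \<and> S6 = -1 \<and> det4 (H 5) (H 6) (H 1) (H 2) > 0 \<and> det4 (H 5) (H 6) (H 1) (H 4) < 0))"
  and prod: "S2 * S4 * S6 = 1" and curl: "det4 (H 1) (H 2) (H 3) (H 5) > 0"
  shows "det4 (H 1) (H 3) (H 4) (H 6) < 0 \<and> det4 (H 1) (H 4) (H 5) (H 6) < 0 \<and> det4 (H 3) (H 4) (H 5) (H 6) < 0
    \<and> det4 (H 2) (H 3) (H 5) (H 6) > 0 \<and> det4 (H 1) (H 2) (H 3) (H 6) < 0 \<and> det4 (H 1) (H 2) (H 5) (H 6) < 0
    \<and> det4 (H 1) (H 2) (H 4) (H 5) > 0 \<and> det4 (H 2) (H 3) (H 4) (H 5) > 0 \<and> det4 (H 1) (H 2) (H 3) (H 4) < 0"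
proof -
  define c1234 where "c1234 = det4 (H 1) (H 2) (H 3) (H 4)"
  define c1235 where "c1235 = det4 (H 1) (H 2) (H 3) (H 5)"
  define c1236 where "c1236 = det4 (H 1) (H 2) (H 3) (H 6)"
  define c1245 where "c1245 = det4 (H 1) (H 2) (H 4) (H 5)"
  define c1256 where "c1256 = det4 (H 1) (H 2) (H 5) (H 6)"
  define c1345 where "c1345 = det4 (H 1) (H 3) (H 4) (H 5)"
  define c1346 where "c1346 = det4 (H 1) (H 3) (H 4) (H 6)"
  define c1356 where "c1356 = det4 (H 1) (H 3) (H 5) (H 6)"
  define c1456 where "c1456 = det4 (H 1) (H 4) (H 5) (H 6)"
  define c2345 where "c2345 = det4 (H 2) (H 3) (H 4) (H 5)"
  define c2356 where "c2356 = det4 (H 2) (H 3) (H 5) (H 6)"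
  define c3456 where "c3456 = det4 (H 3) (H 4) (H 5) (H 6)"
  have abs1: "\<bar>S2\<bar> = 1 \<and> \<bar>S4\<bar> = 1 \<and> \<bar>S6\<bar> = 1"
    using abs_prod3[OF _ _ _ prod] T2 T4 T6 by blast
  have E: "det4 (H 1) (H 2) (H 3) (H 4) = c1234"
    "det4 (H 1) (H 2) (H 3) (H 5) = c1235"
    "det4 (H 1) (H 2) (H 3) (H 6) = c1236"
    "det4 (H 1) (H 2) (H 4) (H 5) = c1245"
    "det4 (H 1) (H 2) (H 5) (H 3) = - c1235"
    "det4 (H 2) (H 3) (H 1) (H 5) = c1235"
    "det4 (H 2) (H 3) (H 5) (H 6) = c2356"
    "det4 (H 2) (H 3) (H 6) (H 1) = - c1236"
    "det4 (H 3) (H 4) (H 1) (H 5) = c1345"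
    "det4 (H 3) (H 4) (H 5) (H 1) = - c1345"
    "det4 (H 3) (H 4) (H 5) (H 2) = - c2345"
    "det4 (H 3) (H 4) (H 5) (H 6) = c3456"
    "det4 (H 3) (H 4) (H 6) (H 1) = - c1346"
    "det4 (H 4) (H 5) (H 1) (H 2) = c1245"
    "det4 (H 4) (H 5) (H 2) (H 3) = c2345"
    "det4 (H 4) (H 5) (H 3) (H 1) = - c1345"
    "det4 (H 5) (H 6) (H 1) (H 2) = c1256"
    "det4 (H 5) (H 6) (H 1) (H 3) = c1356"
    "det4 (H 5) (H 6) (H 1) (H 4) = c1456"
    "det4 (H 5) (H 6) (H 2) (H 3) = c2356"
    "det4 (H 5) (H 6) (H 3) (H 1) = - c1356"
    "det4 (H 6) (H 1) (H 3) (H 4) = - c1346"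
    "det4 (H 6) (H 1) (H 4) (H 5) = - c1456"
    "det4 (H 6) (H 1) (H 5) (H 3) = c1356"
    by (simp_all add: c1234_def c1235_def c1236_def c1245_def c1256_def c1345_def c1346_def c1356_def c1456_def c2345_def c2356_def c3456_def det4_expand algebra_simps)
  have A2: "(S2 = 1 \<and> c1234 < 0 \<and> c1245 > 0 \<and> c2345 > 0 \<and> c1345 < 0)
      \<or> (S2 = -1 \<and> c1236 < 0 \<and> c1256 < 0 \<and> c2356 < 0 \<and> c1356 > 0)"
    using T2 abs1 curl by (simp only: E) auto
  have A4: "(- c1345 > 0 \<and> S4 = 1 \<and> c3456 < 0 \<and> - c1346 > 0 \<and> - c1456 > 0 \<and> c1356 > 0)
   \<or> (- c1345 < 0 \<and> S4 = -1 \<and> c3456 > 0 \<and> - c1346 < 0 \<and> - c1456 < 0 \<and> c1356 < 0)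
   \<or> (- c1345 > 0 \<and> S4 = -1 \<and> - c2345 < 0 \<and> c1234 < 0 \<and> c1245 < 0 \<and> - c1235 < 0)
   \<or> (- c1345 < 0 \<and> S4 = 1 \<and> - c2345 > 0 \<and> c1234 > 0 \<and> c1245 > 0 \<and> - c1235 > 0)
   \<or> (- c1345 = 0 \<and> S4 = 1 \<and> c3456 < 0 \<and> - c2345 > 0)
   \<or> (- c1345 = 0 \<and> S4 = -1 \<and> c3456 > 0 \<and> - c2345 < 0)"
    using T4 abs1 by (simp only: E)
  have A6: "(c1356 > 0 \<and> S6 = 1 \<and> c1256 < 0 \<and> c2356 > 0 \<and> - c1236 > 0 \<and> c1235 > 0)
   \<or> (c1356 < 0 \<and> S6 = -1 \<and> c1256 > 0 \<and> c2356 < 0 \<and> - c1236 < 0 \<and> c1235 < 0)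
   \<or> (c1356 > 0 \<and> S6 = -1 \<and> c1456 < 0 \<and> c3456 < 0 \<and> - c1346 < 0 \<and> c1345 < 0)
   \<or> (c1356 < 0 \<and> S6 = 1 \<and> c1456 > 0 \<and> c3456 > 0 \<and> - c1346 > 0 \<and> c1345 > 0)
   \<or> (c1356 = 0 \<and> S6 = 1 \<and> c1256 < 0 \<and> c1456 > 0)
   \<or> (c1356 = 0 \<and> S6 = -1 \<and> c1256 > 0 \<and> c1456 < 0)"
    using T6 abs1 by (simp only: E)
  have c35: "c1235 > 0" using curl by (simp only: E)
  show ?thesis
  proof -
    from A2 show ?thesis
    proof
      assume a2: "S2 = 1 \<and> c1234 < 0 \<and> c1245 > 0 \<and> c2345 > 0 \<and> c1345 < 0"
      with A4 have a4: "S4 = 1 \<and> c3456 < 0 \<and> - c1346 > 0 \<and> - c1456 > 0 \<and> c1356 > 0" by auto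
      with A6 a2 prod have a6: "c1256 < 0 \<and> c2356 > 0 \<and> - c1236 > 0" by auto
      from a2 a4 a6 show ?thesis by (simp only: c1234_def[symmetric] c1236_def[symmetric] c1245_def[symmetric] c1256_def[symmetric] c1346_def[symmetric] c1456_def[symmetric] c2345_def[symmetric] c2356_def[symmetric] c3456_def[symmetric]) auto
    next
      assume a2: "S2 = -1 \<and> c1236 < 0 \<and> c1256 < 0 \<and> c2356 < 0 \<and> c1356 > 0"
      with A6 have a6: "S6 = -1 \<and> c1456 < 0 \<and> c3456 < 0 \<and> - c1346 < 0 \<and> c1345 < 0" by auto
      with A4 a2 prod have False by auto
      then show ?thesis ..
    qed
  qed
qed

lemma norm3: "norm (x::real^3) = sqrt (x$1^2 + x$2^2 + x$3^2)"
  by (simp add: norm_eq_sqrt_inner inner_vec_def sum_3 power2_eq_square)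

lemma sum6: "(\<Sum>j\<in>{1..6::nat}. f j) = f 1 + f 2 + f 3 + f 4 + f 5 + f 6"
  by (simp add: numeral_eq_Suc sum.atLeast_Suc_atMost add.assoc)

lemma edge_eti: "edge_tri_int H i j = eti (cv H (i+5)) (cv H i) (cv H (i+1)) (cv H j) (cv H (j+1))"
  unfolding edge_tri_int_def eti_def Let_def by simp

lemma Delta_gen: "Delta H i = eti (cv H (i+5)) (cv H i) (cv H (i+1)) (cv H 1) (cv H 2)
  + eti (cv H (i+5)) (cv H i) (cv H (i+1)) (cv H 2) (cv H 3)
  + eti (cv H (i+5)) (cv H i) (cv H (i+1)) (cv H 3) (cv H 4)
  + eti (cv H (i+5)) (cv H i) (cv H (i+1)) (cv H 4) (cv H 5)
  + eti (cv H (i+5)) (cv H i) (cv H (i+1)) (cv H 5) (cv H 6)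
  + eti (cv H (i+5)) (cv H i) (cv H (i+1)) (cv H 6) (cv H 7)"
  unfolding Delta_def edge_eti sum6 by (simp add: numeral_eq_Suc del: One_nat_def)

lemma cv_eq: "Suc ((k + 5) mod 6) = m \<Longrightarrow> cv H k = H m" unfolding cv_def by simp
lemma cvs: "cv H 1 = H 1" "cv H 2 = H 2" "cv H 3 = H 3" "cv H 4 = H 4" "cv H 5 = H 5" "cv H 6 = H 6"
  "cv H 7 = H 1" "cv H 9 = H 3" "cv H 11 = H 5"
  by (rule cv_eq; simp)+

lemma Delta2: "Delta H 2 = eti (H 1) (H 2) (H 3) (H 1) (H 2) + eti (H 1) (H 2) (H 3) (H 2) (H 3)
   + eti (H 1) (H 2) (H 3) (H 3) (H 4) + eti (H 1) (H 2) (H 3) (H 4) (H 5)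
   + eti (H 1) (H 2) (H 3) (H 5) (H 6) + eti (H 1) (H 2) (H 3) (H 6) (H 1)"
proof -
  have "Delta H 2 = eti (cv H 7) (cv H 2) (cv H 3) (cv H 1) (cv H 2)
  + eti (cv H 7) (cv H 2) (cv H 3) (cv H 2) (cv H 3)
  + eti (cv H 7) (cv H 2) (cv H 3) (cv H 3) (cv H 4)
  + eti (cv H 7) (cv H 2) (cv H 3) (cv H 4) (cv H 5)
  + eti (cv H 7) (cv H 2) (cv H 3) (cv H 5) (cv H 6)
  + eti (cv H 7) (cv H 2) (cv H 3) (cv H 6) (cv H 7)" using Delta_gen[of H 2] by simp
  then show ?thesis by (simp only: cvs)
qed

lemma Delta4: "Delta H 4 = eti (H 3) (H 4) (H 5) (H 3) (H 4) + eti (H 3) (H 4) (H 5) (H 4) (H 5)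
   + eti (H 3) (H 4) (H 5) (H 5) (H 6) + eti (H 3) (H 4) (H 5) (H 6) (H 1)
   + eti (H 3) (H 4) (H 5) (H 1) (H 2) + eti (H 3) (H 4) (H 5) (H 2) (H 3)"
proof -
  have "Delta H 4 = eti (cv H 9) (cv H 4) (cv H 5) (cv H 1) (cv H 2)
  + eti (cv H 9) (cv H 4) (cv H 5) (cv H 2) (cv H 3)
  + eti (cv H 9) (cv H 4) (cv H 5) (cv H 3) (cv H 4)
  + eti (cv H 9) (cv H 4) (cv H 5) (cv H 4) (cv H 5)
  + eti (cv H 9) (cv H 4) (cv H 5) (cv H 5) (cv H 6)
  + eti (cv H 9) (cv H 4) (cv H 5) (cv H 6) (cv H 7)" using Delta_gen[of H 4] by simp
  then show ?thesis by (simp only: cvs add_ac)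
qed

lemma Delta6: "Delta H 6 = eti (H 5) (H 6) (H 1) (H 5) (H 6) + eti (H 5) (H 6) (H 1) (H 6) (H 1)
   + eti (H 5) (H 6) (H 1) (H 1) (H 2) + eti (H 5) (H 6) (H 1) (H 2) (H 3)
   + eti (H 5) (H 6) (H 1) (H 3) (H 4) + eti (H 5) (H 6) (H 1) (H 4) (H 5)"
proof -
  have "Delta H 6 = eti (cv H 11) (cv H 6) (cv H 7) (cv H 1) (cv H 2)
  + eti (cv H 11) (cv H 6) (cv H 7) (cv H 2) (cv H 3)
  + eti (cv H 11) (cv H 6) (cv H 7) (cv H 3) (cv H 4)
  + eti (cv H 11) (cv H 6) (cv H 7) (cv H 4) (cv H 5)
  + eti (cv H 11) (cv H 6) (cv H 7) (cv H 5) (cv H 6)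
  + eti (cv H 11) (cv H 6) (cv H 7) (cv H 6) (cv H 7)" using Delta_gen[of H 6] by simp
  then show ?thesis by (simp only: cvs add_ac)
qed

lemma noncol:
  fixes p q r :: "real^3"
  assumes "norm (q - p) = 1" "norm (r - q) = 1" "0 < norm (r - p)" "norm (r - p) < 2"
  shows "cross3 (q - p) (r - q) \<noteq> 0"
proof
  assume c: "cross3 (q - p) (r - q) = 0"
  define x where "x = q - p"
  define y where "y = r - q"
  have "(norm (cross3 x y))\<^sup>2 + (x \<bullet> y)\<^sup>2 = (norm x * norm y)\<^sup>2" by (rule norm_cross_dot)
  then have xy: "(x \<bullet> y)\<^sup>2 = 1" using c assms(1,2) unfolding x_def y_def by simp
  have rp: "r - p = x + y" unfolding x_def y_def by simp
  have "(norm (r - p))\<^sup>2 = (norm x)\<^sup>2 + 2 * (x \<bullet> y) + (norm y)\<^sup>2"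
    unfolding rp by (simp add: power2_norm_eq_inner inner_add_left inner_add_right inner_commute)
  then have e: "(norm (r - p))\<^sup>2 = 2 + 2 * (x \<bullet> y)" using assms(1,2) unfolding x_def y_def by simp
  have "x \<bullet> y = 1 \<or> x \<bullet> y = -1" using xy by (simp add: power2_eq_1_iff)
  moreover have "0 < (norm (r - p))\<^sup>2" using assms(3) by simp
  moreover have "(norm (r - p))\<^sup>2 < 4"
  proof -
    have "norm (r - p) * norm (r - p) < 2 * 2" using assms(3,4) by (intro mult_strict_mono) auto
    then show ?thesis by (simp add: power2_eq_square)
  qed
  ultimately show False using e by auto
qed

lemma perp_comp:
  fixes a b c :: "real^3"
  assumes "a$3 = 0" "b$3 = 0" "c$3 = 0"
    and cr: "(b$1-a$1) * (c$2-a$2) - (b$2-a$2) * (c$1-a$1) > 0"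
  shows "perp_toward a b c $ 1 = -(b$2-a$2)/norm(b-a) \<and> perp_toward a b c $ 2 = (b$1-a$1)/norm(b-a)
     \<and> perp_toward a b c $ 3 = 0"
proof -
  define v1 where "v1 = b$1-a$1"
  define v2 where "v2 = b$2-a$2"
  define w1 where "w1 = c$1-a$1"
  define w2 where "w2 = c$2-a$2"
  define k where "k = (v1 * w2 - v2 * w1)/(v1^2+v2^2)"
  have crv: "v1 * w2 - v2 * w1 > 0" using cr unfolding v1_def v2_def w1_def w2_def by simp
  have vpos: "v1^2+v2^2 > 0"
  proof (rule ccontr)
    assume "\<not> v1^2+v2^2 > 0"
    then have "v1 = 0" "v2 = 0" by (auto simp: not_less sum_power2_le_zero_iff)
    then show False using crv by simp
  qed
  have kpos: "k > 0" unfolding k_def using crv vpos by simp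
  have L: "norm (b - a) = sqrt (v1^2+v2^2)" unfolding norm3 v1_def v2_def using assms by simp
  have p: "(c - a) - (((c - a) \<bullet> (b - a)) / ((b - a) \<bullet> (b - a))) *\<^sub>R (b - a)
      = k *\<^sub>R vector [-v2, v1, 0]"
  proof -
    have ip1: "(c - a) \<bullet> (b - a) = w1 * v1 + w2 * v2" unfolding v1_def v2_def w1_def w2_def
      using assms by (simp add: inner_vec_def sum_3)
    have ip2: "(b - a) \<bullet> (b - a) = v1^2 + v2^2" unfolding v1_def v2_def
      using assms by (simp add: inner_vec_def sum_3 power2_eq_square)
    define den where "den = v1^2 + v2^2"
    have n0: "den \<noteq> 0" unfolding den_def using vpos by linarith
    define sc where "sc = (w1 * v1 + w2 * v2) / (v1^2 + v2^2)"
    have kd: "k = (v1 * w2 - v2 * w1) / den" unfolding k_def den_def ..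
    have sd: "sc = (w1 * v1 + w2 * v2) / den" unfolding sc_def den_def ..
    have e1: "w1 * den - (w1 * v1 + w2 * v2) * v1 = (v1 * w2 - v2 * w1) * (- v2)"
      unfolding den_def by (simp add: algebra_simps power2_eq_square)
    have e2: "w2 * den - (w1 * v1 + w2 * v2) * v2 = (v1 * w2 - v2 * w1) * v1"
      unfolding den_def by (simp add: algebra_simps power2_eq_square)
    have c1: "w1 - sc * v1 = k * (- v2)" unfolding kd sd using n0 e1
      by (simp add: field_simps)
    have c2: "w2 - sc * v2 = k * v1" unfolding kd sd using n0 e2
      by (simp add: field_simps)
    show ?thesis unfolding ip1 ip2 sc_def[symmetric]
      using c1 c2 by (simp add: vec_eq_iff forall_3 assms v1_def v2_def w1_def w2_def algebra_simps)
  qed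
  have nv: "norm (vector [-v2, v1, 0] :: real^3) = sqrt (v1^2+v2^2)"
    unfolding norm3 by (simp add: add.commute)
  have np: "norm (k *\<^sub>R (vector [-v2, v1, 0] :: real^3)) = k * sqrt (v1^2+v2^2)"
    using kpos nv by simp
  have sq: "sqrt (v1^2+v2^2) > 0" using vpos by simp
  have "perp_toward a b c = (1 / (k * sqrt (v1^2+v2^2))) *\<^sub>R (k *\<^sub>R vector [-v2, v1, 0])"
    unfolding perp_toward_def Let_def p np ..
  also have "\<dots> = (1 / sqrt (v1^2+v2^2)) *\<^sub>R vector [-v2, v1, 0]"
    using kpos by simp
  finally show ?thesis unfolding L v1_def[symmetric] v2_def[symmetric] by simp
qed

definition dx :: "real \<times> real \<times> real \<Rightarrow> real \<times> real \<times> real \<Rightarrow> real \<times> real \<times> real \<Rightarrow> real \<times> real \<times> real \<Rightarrow> real" where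
 "dx a b c d = (case a of (a1,a2,a3) \<Rightarrow> case b of (b1,b2,b3) \<Rightarrow> case c of (c1,c2,c3) \<Rightarrow> case d of (d1,d2,d3) \<Rightarrow>
   (b1-a1)*((c2-a2)*(d3-a3) - (c3-a3)*(d2-a2))
 - (b2-a2)*((c1-a1)*(d3-a3) - (c3-a3)*(d1-a1))
 + (b3-a3)*((c1-a1)*(d2-a2) - (c2-a2)*(d1-a1)))"

lemma f1_id:
  fixes d1 d2 d3 X Y r1 r2 r3 c1 zs1 c2 zs2 c3 zs3 d :: real
  assumes "d = 2*d1*Y" "X*(2*d1) = d1^2-d2^2+d3^2" "d2^2 = (X-d1)^2+Y^2" "d3^2 = X^2+Y^2"
    "d1 > 0" "d2 > 0" "d3 > 0"
  defines "P1 \<equiv> (0,0,0)" and "P2 \<equiv> (d1/2, r1*c1/2, r1* zs1/2)" and "P3 \<equiv> (d1,0,0)"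
    and "P4 \<equiv> ((d1+X)/2 + r2/2*c2*(-Y/d2), Y/2 + r2/2*c2*((X-d1)/d2), r2/2* zs2)"
    and "P5 \<equiv> (X,Y,0)"
    and "P6 \<equiv> (X/2 + r3/2*c3*(Y/d3), Y/2 + r3/2*c3*(-X/d3), r3/2* zs3)"
  shows "(d2 * r2 * zs2 * (d3*d - (d1^2 - d2^2 + d3^2) * r3 * c3) - d3 * r3 * zs3 * (d2*d - (d1^2 + d2^2 - d3^2) * r2 * c2)) * 1 = -8*d2*d3 * dx P1 P3 P4 P6"
proof -
  have X: "X = (d1^2-d2^2+d3^2)/(2*d1)" using assms(2,5) by (simp add: field_simps)
  have Y: "Y^2 = d3^2 - X^2" using assms(4) by simp
  have e: "d2^2 = d3^2 + d1^2 - 2*d1*X" using assms(3,4) by (simp add: power2_eq_square algebra_simps)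
  show ?thesis unfolding P1_def P2_def P3_def P4_def P5_def P6_def dx_def assms(1)
    using assms(5,6,7) Y e by (simp add: field_simps) algebra
qed


lemma g1_id:
  fixes d1 d2 d3 X Y r1 r2 r3 c1 zs1 c2 zs2 c3 zs3 d :: real
  assumes "d = 2*d1*Y" "X*(2*d1) = d1^2-d2^2+d3^2" "d2^2 = (X-d1)^2+Y^2" "d3^2 = X^2+Y^2"
    "d1 > 0" "d2 > 0" "d3 > 0"
  defines "P1 \<equiv> (0,0,0)" and "P2 \<equiv> (d1/2, r1*c1/2, r1* zs1/2)" and "P3 \<equiv> (d1,0,0)"
    and "P4 \<equiv> ((d1+X)/2 + r2/2*c2*(-Y/d2), Y/2 + r2/2*c2*((X-d1)/d2), r2/2* zs2)"
    and "P5 \<equiv> (X,Y,0)"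
    and "P6 \<equiv> (X/2 + r3/2*c3*(Y/d3), Y/2 + r3/2*c3*(-X/d3), r3/2* zs3)"
  shows "(r2 * ((- (d1^2) + d2^2 + d3^2) / (2*d2*d3) * c2 * zs3 + zs2 * c3) - d * zs3 / (2*d3)) * (d3*r3) = -4 * dx P1 P4 P5 P6"
proof -
  have X: "X = (d1^2-d2^2+d3^2)/(2*d1)" using assms(2,5) by (simp add: field_simps)
  have Y: "Y^2 = d3^2 - X^2" using assms(4) by simp
  have e: "d2^2 = d3^2 + d1^2 - 2*d1*X" using assms(3,4) by (simp add: power2_eq_square algebra_simps)
  show ?thesis unfolding P1_def P2_def P3_def P4_def P5_def P6_def dx_def assms(1)
    using assms(5,6,7) Y e by (simp add: field_simps) algebra
qed


lemma h1_id:
  fixes d1 d2 d3 X Y r1 r2 r3 c1 zs1 c2 zs2 c3 zs3 d :: real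
  assumes "d = 2*d1*Y" "X*(2*d1) = d1^2-d2^2+d3^2" "d2^2 = (X-d1)^2+Y^2" "d3^2 = X^2+Y^2"
    "d1 > 0" "d2 > 0" "d3 > 0"
  defines "P1 \<equiv> (0,0,0)" and "P2 \<equiv> (d1/2, r1*c1/2, r1* zs1/2)" and "P3 \<equiv> (d1,0,0)"
    and "P4 \<equiv> ((d1+X)/2 + r2/2*c2*(-Y/d2), Y/2 + r2/2*c2*((X-d1)/d2), r2/2* zs2)"
    and "P5 \<equiv> (X,Y,0)"
    and "P6 \<equiv> (X/2 + r3/2*c3*(Y/d3), Y/2 + r3/2*c3*(-X/d3), r3/2* zs3)"
  shows "(r3 * ((- (d1^2) + d2^2 + d3^2) / (2*d2*d3) * c3 * zs2 + zs3 * c2) - d * zs2 / (2*d2)) * (d2*r2) = -4 * dx P3 P4 P5 P6"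
proof -
  have X: "X = (d1^2-d2^2+d3^2)/(2*d1)" using assms(2,5) by (simp add: field_simps)
  have Y: "Y^2 = d3^2 - X^2" using assms(4) by simp
  have e: "d2^2 = d3^2 + d1^2 - 2*d1*X" using assms(3,4) by (simp add: power2_eq_square algebra_simps)
  show ?thesis unfolding P1_def P2_def P3_def P4_def P5_def P6_def dx_def assms(1)
    using assms(5,6,7) Y e by (simp add: field_simps) algebra
qed


lemma f2_id:
  fixes d1 d2 d3 X Y r1 r2 r3 c1 zs1 c2 zs2 c3 zs3 d :: real
  assumes "d = 2*d1*Y" "X*(2*d1) = d1^2-d2^2+d3^2" "d2^2 = (X-d1)^2+Y^2" "d3^2 = X^2+Y^2"
    "d1 > 0" "d2 > 0" "d3 > 0"
  defines "P1 \<equiv> (0,0,0)" and "P2 \<equiv> (d1/2, r1*c1/2, r1* zs1/2)" and "P3 \<equiv> (d1,0,0)"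
    and "P4 \<equiv> ((d1+X)/2 + r2/2*c2*(-Y/d2), Y/2 + r2/2*c2*((X-d1)/d2), r2/2* zs2)"
    and "P5 \<equiv> (X,Y,0)"
    and "P6 \<equiv> (X/2 + r3/2*c3*(Y/d3), Y/2 + r3/2*c3*(-X/d3), r3/2* zs3)"
  shows "(d3 * r3 * zs3 * (d1*d - (d1^2 + d2^2 - d3^2) * r1 * c1) - d1 * r1 * zs1 * (d3*d - (- (d1^2) + d2^2 + d3^2) * r3 * c3)) * 1 = 8*d1*d3 * dx P2 P3 P5 P6"
proof -
  have X: "X = (d1^2-d2^2+d3^2)/(2*d1)" using assms(2,5) by (simp add: field_simps)
  have Y: "Y^2 = d3^2 - X^2" using assms(4) by simp
  have e: "d2^2 = d3^2 + d1^2 - 2*d1*X" using assms(3,4) by (simp add: power2_eq_square algebra_simps)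
  show ?thesis unfolding P1_def P2_def P3_def P4_def P5_def P6_def dx_def assms(1)
    using assms(5,6,7) Y e by (simp add: field_simps) algebra
qed


lemma g2_id:
  fixes d1 d2 d3 X Y r1 r2 r3 c1 zs1 c2 zs2 c3 zs3 d :: real
  assumes "d = 2*d1*Y" "X*(2*d1) = d1^2-d2^2+d3^2" "d2^2 = (X-d1)^2+Y^2" "d3^2 = X^2+Y^2"
    "d1 > 0" "d2 > 0" "d3 > 0"
  defines "P1 \<equiv> (0,0,0)" and "P2 \<equiv> (d1/2, r1*c1/2, r1* zs1/2)" and "P3 \<equiv> (d1,0,0)"
    and "P4 \<equiv> ((d1+X)/2 + r2/2*c2*(-Y/d2), Y/2 + r2/2*c2*((X-d1)/d2), r2/2* zs2)"
    and "P5 \<equiv> (X,Y,0)"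
    and "P6 \<equiv> (X/2 + r3/2*c3*(Y/d3), Y/2 + r3/2*c3*(-X/d3), r3/2* zs3)"
  shows "(r3 * ((d1^2 - d2^2 + d3^2) / (2*d1*d3) * c3 * zs1 + zs3 * c1) - d * zs1 / (2*d1)) * (d1*r1) = -4 * dx P1 P2 P3 P6"
proof -
  have X: "X = (d1^2-d2^2+d3^2)/(2*d1)" using assms(2,5) by (simp add: field_simps)
  have Y: "Y^2 = d3^2 - X^2" using assms(4) by simp
  have e: "d2^2 = d3^2 + d1^2 - 2*d1*X" using assms(3,4) by (simp add: power2_eq_square algebra_simps)
  show ?thesis unfolding P1_def P2_def P3_def P4_def P5_def P6_def dx_def assms(1)
    using assms(5,6,7) Y e by (simp add: field_simps) algebra
qed


lemma h2_id:
  fixes d1 d2 d3 X Y r1 r2 r3 c1 zs1 c2 zs2 c3 zs3 d :: real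
  assumes "d = 2*d1*Y" "X*(2*d1) = d1^2-d2^2+d3^2" "d2^2 = (X-d1)^2+Y^2" "d3^2 = X^2+Y^2"
    "d1 > 0" "d2 > 0" "d3 > 0"
  defines "P1 \<equiv> (0,0,0)" and "P2 \<equiv> (d1/2, r1*c1/2, r1* zs1/2)" and "P3 \<equiv> (d1,0,0)"
    and "P4 \<equiv> ((d1+X)/2 + r2/2*c2*(-Y/d2), Y/2 + r2/2*c2*((X-d1)/d2), r2/2* zs2)"
    and "P5 \<equiv> (X,Y,0)"
    and "P6 \<equiv> (X/2 + r3/2*c3*(Y/d3), Y/2 + r3/2*c3*(-X/d3), r3/2* zs3)"
  shows "(r1 * ((d1^2 - d2^2 + d3^2) / (2*d1*d3) * c1 * zs3 + zs1 * c3) - d * zs3 / (2*d3)) * (d3*r3) = -4 * dx P1 P2 P5 P6"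
proof -
  have X: "X = (d1^2-d2^2+d3^2)/(2*d1)" using assms(2,5) by (simp add: field_simps)
  have Y: "Y^2 = d3^2 - X^2" using assms(4) by simp
  have e: "d2^2 = d3^2 + d1^2 - 2*d1*X" using assms(3,4) by (simp add: power2_eq_square algebra_simps)
  show ?thesis unfolding P1_def P2_def P3_def P4_def P5_def P6_def dx_def assms(1)
    using assms(5,6,7) Y e by (simp add: field_simps) algebra
qed


lemma f3_id:
  fixes d1 d2 d3 X Y r1 r2 r3 c1 zs1 c2 zs2 c3 zs3 d :: real
  assumes "d = 2*d1*Y" "X*(2*d1) = d1^2-d2^2+d3^2" "d2^2 = (X-d1)^2+Y^2" "d3^2 = X^2+Y^2"
    "d1 > 0" "d2 > 0" "d3 > 0"
  defines "P1 \<equiv> (0,0,0)" and "P2 \<equiv> (d1/2, r1*c1/2, r1* zs1/2)" and "P3 \<equiv> (d1,0,0)"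
    and "P4 \<equiv> ((d1+X)/2 + r2/2*c2*(-Y/d2), Y/2 + r2/2*c2*((X-d1)/d2), r2/2* zs2)"
    and "P5 \<equiv> (X,Y,0)"
    and "P6 \<equiv> (X/2 + r3/2*c3*(Y/d3), Y/2 + r3/2*c3*(-X/d3), r3/2* zs3)"
  shows "(d1 * r1 * zs1 * (d2*d - (- (d1^2) + d2^2 + d3^2) * r2 * c2) - d2 * r2 * zs2 * (d1*d - (d1^2 - d2^2 + d3^2) * r1 * c1)) * 1 = 8*d1*d2 * dx P1 P2 P4 P5"
proof -
  have X: "X = (d1^2-d2^2+d3^2)/(2*d1)" using assms(2,5) by (simp add: field_simps)
  have Y: "Y^2 = d3^2 - X^2" using assms(4) by simp
  have e: "d2^2 = d3^2 + d1^2 - 2*d1*X" using assms(3,4) by (simp add: power2_eq_square algebra_simps)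
  show ?thesis unfolding P1_def P2_def P3_def P4_def P5_def P6_def dx_def assms(1)
    using assms(5,6,7) Y e by (simp add: field_simps) algebra
qed


lemma g3_id:
  fixes d1 d2 d3 X Y r1 r2 r3 c1 zs1 c2 zs2 c3 zs3 d :: real
  assumes "d = 2*d1*Y" "X*(2*d1) = d1^2-d2^2+d3^2" "d2^2 = (X-d1)^2+Y^2" "d3^2 = X^2+Y^2"
    "d1 > 0" "d2 > 0" "d3 > 0"
  defines "P1 \<equiv> (0,0,0)" and "P2 \<equiv> (d1/2, r1*c1/2, r1* zs1/2)" and "P3 \<equiv> (d1,0,0)"
    and "P4 \<equiv> ((d1+X)/2 + r2/2*c2*(-Y/d2), Y/2 + r2/2*c2*((X-d1)/d2), r2/2* zs2)"
    and "P5 \<equiv> (X,Y,0)"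
    and "P6 \<equiv> (X/2 + r3/2*c3*(Y/d3), Y/2 + r3/2*c3*(-X/d3), r3/2* zs3)"
  shows "(r1 * ((d1^2 + d2^2 - d3^2) / (2*d1*d2) * c1 * zs2 + zs1 * c2) - d * zs2 / (2*d2)) * (d2*r2) = 4 * dx P2 P3 P4 P5"
proof -
  have X: "X = (d1^2-d2^2+d3^2)/(2*d1)" using assms(2,5) by (simp add: field_simps)
  have Y: "Y^2 = d3^2 - X^2" using assms(4) by simp
  have e: "d2^2 = d3^2 + d1^2 - 2*d1*X" using assms(3,4) by (simp add: power2_eq_square algebra_simps)
  show ?thesis unfolding P1_def P2_def P3_def P4_def P5_def P6_def dx_def assms(1)
    using assms(5,6,7) Y e by (simp add: field_simps) algebra
qed


lemma h3_id:
  fixes d1 d2 d3 X Y r1 r2 r3 c1 zs1 c2 zs2 c3 zs3 d :: real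
  assumes "d = 2*d1*Y" "X*(2*d1) = d1^2-d2^2+d3^2" "d2^2 = (X-d1)^2+Y^2" "d3^2 = X^2+Y^2"
    "d1 > 0" "d2 > 0" "d3 > 0"
  defines "P1 \<equiv> (0,0,0)" and "P2 \<equiv> (d1/2, r1*c1/2, r1* zs1/2)" and "P3 \<equiv> (d1,0,0)"
    and "P4 \<equiv> ((d1+X)/2 + r2/2*c2*(-Y/d2), Y/2 + r2/2*c2*((X-d1)/d2), r2/2* zs2)"
    and "P5 \<equiv> (X,Y,0)"
    and "P6 \<equiv> (X/2 + r3/2*c3*(Y/d3), Y/2 + r3/2*c3*(-X/d3), r3/2* zs3)"
  shows "(r2 * ((d1^2 + d2^2 - d3^2) / (2*d1*d2) * c2 * zs1 + zs2 * c1) - d * zs1 / (2*d1)) * (d1*r1) = -4 * dx P1 P2 P3 P4"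
proof -
  have X: "X = (d1^2-d2^2+d3^2)/(2*d1)" using assms(2,5) by (simp add: field_simps)
  have Y: "Y^2 = d3^2 - X^2" using assms(4) by simp
  have e: "d2^2 = d3^2 + d1^2 - 2*d1*X" using assms(3,4) by (simp add: power2_eq_square algebra_simps)
  show ?thesis unfolding P1_def P2_def P3_def P4_def P5_def P6_def dx_def assms(1)
    using assms(5,6,7) Y e by (simp add: field_simps) algebra
qed

lemma det4_dx: "det4 a b c d = dx (a$1,a$2,a$3) (b$1,b$2,b$3) (c$1,c$2,c$3) (d$1,d$2,d$3)"
  unfolding det4_expand dx_def by simp

lemma pos_of_eq: "(Q::real) * m = k * D \<Longrightarrow> 0 < m \<Longrightarrow> 0 < k * D \<Longrightarrow> 0 < Q"
  by (metis zero_less_mult_iff less_asym)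

theorem mainTheorem4:
  fixes H :: "nat \<Rightarrow> real^3" and d1 d2 d3 t1 t2 t3 d :: real
  assumes "equilateral_hex H" and "embedded_hex H" and "standard_position H"
    and "action_angle H d1 d2 d3 t1 t2 t3"
    and "d = sqrt (2*d1^2*d2^2 + 2*d1^2*d3^2 + 2*d2^2*d3^2 - d1^4 - d2^4 - d3^4)"
    and "joint_cc H = (1, 1)"
  shows
   "0 < d2 * sqrt (4 - d2^2) * sin t2 * (d3*d - (d1^2 - d2^2 + d3^2) * sqrt (4 - d3^2) * cos t3)
        - d3 * sqrt (4 - d3^2) * sin t3 * (d2*d - (d1^2 + d2^2 - d3^2) * sqrt (4 - d2^2) * cos t2)
  \<and> 0 < sqrt (4 - d2^2) * ((- (d1^2) + d2^2 + d3^2) / (2*d2*d3) * cos t2 * sin t3 + sin t2 * cos t3)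
        - d * sin t3 / (2*d3)
  \<and> 0 < sqrt (4 - d3^2) * ((- (d1^2) + d2^2 + d3^2) / (2*d2*d3) * cos t3 * sin t2 + sin t3 * cos t2)
        - d * sin t2 / (2*d2)
  \<and> 0 < d3 * sqrt (4 - d3^2) * sin t3 * (d1*d - (d1^2 + d2^2 - d3^2) * sqrt (4 - d1^2) * cos t1)
        - d1 * sqrt (4 - d1^2) * sin t1 * (d3*d - (- (d1^2) + d2^2 + d3^2) * sqrt (4 - d3^2) * cos t3)
  \<and> 0 < sqrt (4 - d3^2) * ((d1^2 - d2^2 + d3^2) / (2*d1*d3) * cos t3 * sin t1 + sin t3 * cos t1)
        - d * sin t1 / (2*d1)
  \<and> 0 < sqrt (4 - d1^2) * ((d1^2 - d2^2 + d3^2) / (2*d1*d3) * cos t1 * sin t3 + sin t1 * cos t3)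
        - d * sin t3 / (2*d3)
  \<and> 0 < d1 * sqrt (4 - d1^2) * sin t1 * (d2*d - (- (d1^2) + d2^2 + d3^2) * sqrt (4 - d2^2) * cos t2)
        - d2 * sqrt (4 - d2^2) * sin t2 * (d1*d - (d1^2 - d2^2 + d3^2) * sqrt (4 - d1^2) * cos t1)
  \<and> 0 < sqrt (4 - d1^2) * ((d1^2 + d2^2 - d3^2) / (2*d1*d2) * cos t1 * sin t2 + sin t1 * cos t2)
        - d * sin t2 / (2*d2)
  \<and> 0 < sqrt (4 - d2^2) * ((d1^2 + d2^2 - d3^2) / (2*d1*d2) * cos t2 * sin t1 + sin t2 * cos t1)
        - d * sin t1 / (2*d1)"
proof -
  have sp: "H 1 = 0" "H 3 $ 1 > 0" "H 3 $ 2 = 0" "H 3 $ 3 = 0" "H 5 $ 3 = 0" "H 5 $ 2 > 0"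
    using assms(3) unfolding standard_position_def by auto
  have aa: "d1 = dist (H 3) (H 1)" "d2 = dist (H 5) (H 3)" "d3 = dist (H 1) (H 5)"
     "0 < d1" "d1 < 2" "0 < d2" "d2 < 2" "0 < d3" "d3 < 2"
    using assms(4) unfolding action_angle_def by auto
  have H2: "H 2 = midpoint (H 1) (H 3) + (sqrt (4 - d1\<^sup>2) / 2) *\<^sub>R
             (cos t1 *\<^sub>R perp_toward (H 1) (H 3) (H 5) + sin t1 *\<^sub>R e_z)"
   and H4: "H 4 = midpoint (H 3) (H 5) + (sqrt (4 - d2\<^sup>2) / 2) *\<^sub>R
             (cos t2 *\<^sub>R perp_toward (H 3) (H 5) (H 1) + sin t2 *\<^sub>R e_z)"
   and H6: "H 6 = midpoint (H 5) (H 1) + (sqrt (4 - d3\<^sup>2) / 2) *\<^sub>R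
             (cos t3 *\<^sub>R perp_toward (H 5) (H 1) (H 3) + sin t3 *\<^sub>R e_z)"
    using assms(4) unfolding action_angle_def by auto
  have eq1: "\<forall>i\<in>{1..6}. dist (cv H i) (cv H (i + 1)) = 1"
    using assms(1) unfolding equilateral_hex_def .
  have e12: "norm (H 2 - H 1) = 1"
  proof -
    have "dist (cv H 1) (cv H (1 + 1)) = 1" by (rule eq1[rule_format]) simp
    moreover have "(1::nat) + 1 = 2" by simp
    ultimately have "dist (cv H 1) (cv H 2) = 1" by (simp only:)
    then show ?thesis by (simp only: cvs) (simp add: dist_norm norm_minus_commute)
  qed
  have e23: "norm (H 3 - H 2) = 1"
  proof -
    have "dist (cv H 2) (cv H (2 + 1)) = 1" by (rule eq1[rule_format]) simp
    moreover have "(2::nat) + 1 = 3" by simp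
    ultimately have "dist (cv H 2) (cv H 3) = 1" by (simp only:)
    then show ?thesis by (simp only: cvs) (simp add: dist_norm norm_minus_commute)
  qed
  have e34: "norm (H 4 - H 3) = 1"
  proof -
    have "dist (cv H 3) (cv H (3 + 1)) = 1" by (rule eq1[rule_format]) simp
    moreover have "(3::nat) + 1 = 4" by simp
    ultimately have "dist (cv H 3) (cv H 4) = 1" by (simp only:)
    then show ?thesis by (simp only: cvs) (simp add: dist_norm norm_minus_commute)
  qed
  have e45: "norm (H 5 - H 4) = 1"
  proof -
    have "dist (cv H 4) (cv H (4 + 1)) = 1" by (rule eq1[rule_format]) simp
    moreover have "(4::nat) + 1 = 5" by simp
    ultimately have "dist (cv H 4) (cv H 5) = 1" by (simp only:)
    then show ?thesis by (simp only: cvs) (simp add: dist_norm norm_minus_commute)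
  qed
  have e56: "norm (H 6 - H 5) = 1"
  proof -
    have "dist (cv H 5) (cv H (5 + 1)) = 1" by (rule eq1[rule_format]) simp
    moreover have "(5::nat) + 1 = 6" by simp
    ultimately have "dist (cv H 5) (cv H 6) = 1" by (simp only:)
    then show ?thesis by (simp only: cvs) (simp add: dist_norm norm_minus_commute)
  qed
  have e61: "norm (H 1 - H 6) = 1"
  proof -
    have "dist (cv H 6) (cv H (6 + 1)) = 1" by (rule eq1[rule_format]) simp
    moreover have "(6::nat) + 1 = 7" by simp
    ultimately have "dist (cv H 6) (cv H 7) = 1" by (simp only:)
    then show ?thesis by (simp only: cvs) (simp add: dist_norm norm_minus_commute)
  qed
  have n31: "norm (H 3 - H 1) = d1" using aa(1) by (simp add: dist_norm)
  have n53: "norm (H 5 - H 3) = d2" using aa(2) by (simp add: dist_norm)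
  have n15: "norm (H 1 - H 5) = d3" using aa(3) by (simp add: dist_norm)
  have N2: "cross3 (H 2 - H 1) (H 3 - H 2) \<noteq> 0" using noncol[OF e12 e23] n31 aa by simp
  have N4: "cross3 (H 4 - H 3) (H 5 - H 4) \<noteq> 0" using noncol[OF e34 e45] n53 aa by simp
  have N6: "cross3 (H 6 - H 5) (H 1 - H 6) \<noteq> 0" using noncol[OF e56 e61] n15 aa by simp
  note T2 = tri_lemma[OF N2, of "H 4" "H 5" "H 6", folded Delta2]
  note T4 = tri_lemma[OF N4, of "H 6" "H 1" "H 2", folded Delta4]
  note T6 = tri_lemma[OF N6, of "H 2" "H 3" "H 4", folded Delta6]
  have jc: "Delta H 2 * Delta H 4 * Delta H 6 = 1"
    "(Delta H 2)\<^sup>2 * (Delta H 4)\<^sup>2 * (Delta H 6)\<^sup>2 * hex_curl H = 1"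
    using assms(6) unfolding joint_cc_def by auto
  have "(Delta H 2)\<^sup>2 * (Delta H 4)\<^sup>2 * (Delta H 6)\<^sup>2 = (Delta H 2 * Delta H 4 * Delta H 6)\<^sup>2"
    by (simp add: power_mult_distrib)
  then have "hex_curl H = 1" using jc by simp
  then have "cross3 (H 3 - H 1) (H 5 - H 1) \<bullet> (H 2 - H 1) > 0"
    unfolding hex_curl_def by (simp add: sgn_1_pos)
  moreover have "det4 (H 1) (H 2) (H 3) (H 5) = cross3 (H 3 - H 1) (H 5 - H 1) \<bullet> (H 2 - H 1)"
    unfolding det4_def by (simp add: cross3_simps)
  ultimately have curl: "det4 (H 1) (H 2) (H 3) (H 5) > 0" by simp
  have S: "det4 (H 1) (H 3) (H 4) (H 6) < 0 \<and> det4 (H 1) (H 4) (H 5) (H 6) < 0 \<and> det4 (H 3) (H 4) (H 5) (H 6) < 0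
    \<and> det4 (H 2) (H 3) (H 5) (H 6) > 0 \<and> det4 (H 1) (H 2) (H 3) (H 6) < 0 \<and> det4 (H 1) (H 2) (H 5) (H 6) < 0
    \<and> det4 (H 1) (H 2) (H 4) (H 5) > 0 \<and> det4 (H 2) (H 3) (H 4) (H 5) > 0 \<and> det4 (H 1) (H 2) (H 3) (H 4) < 0"
    by (rule combine[OF T2 T4 T6 jc(1) curl])
  define X where "X = H 5 $ 1"
  define Y where "Y = H 5 $ 2"
  have Ypos: "Y > 0" using sp unfolding Y_def by simp
  have d1c: "H 3 $ 1 = d1" using n31 sp by (simp add: norm3)
  have d3e: "d3 = sqrt (X^2 + Y^2)" using n15 sp unfolding X_def Y_def by (simp add: norm3)
  have d3c: "d3^2 = (X^2 + Y^2)" unfolding d3e by simp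
  have d2e: "d2 = sqrt ((X - d1)^2 + Y^2)" using n53 sp d1c unfolding X_def Y_def by (simp add: norm3)
  have d2c: "d2^2 = (X - d1)^2 + Y^2" unfolding d2e by simp
  have Xc: "X*(2*d1) = d1^2-d2^2+d3^2" unfolding d2c d3c by (simp add: power2_eq_square algebra_simps)
  have DY: "2*d1^2*d2^2 + 2*d1^2*d3^2 + 2*d2^2*d3^2 - d1^4 - d2^4 - d3^4 = (2*d1*Y)^2"
  proof -
    have "2*d1^2*d2^2 + 2*d1^2*d3^2 + 2*d2^2*d3^2 - d1^4 - d2^4 - d3^4
       = 2*d1^2*(d2^2) + 2*d1^2*(d3^2) + 2*(d2^2)*(d3^2) - d1^4 - (d2^2)^2 - (d3^2)^2" by algebra
    also have "\<dots> = (2*d1*Y)^2" unfolding d2c d3c by algebra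
    finally show ?thesis .
  qed
  have dY: "d = 2*d1*Y" using assms(5) DY aa(4) Ypos by simp
  have ez: "e_z $ 1 = 0" "e_z $ 2 = 0" "e_z $ 3 = 1" unfolding e_z_def by simp_all
  have u1: "perp_toward (H 1) (H 3) (H 5) $ 1 = 0 \<and> perp_toward (H 1) (H 3) (H 5) $ 2 = 1
      \<and> perp_toward (H 1) (H 3) (H 5) $ 3 = 0"
    using perp_comp[of "H 1" "H 3" "H 5"] sp d1c n31 aa(4) Ypos unfolding Y_def by simp
  have u2: "perp_toward (H 3) (H 5) (H 1) $ 1 = -Y/d2 \<and> perp_toward (H 3) (H 5) (H 1) $ 2 = (X-d1)/d2
      \<and> perp_toward (H 3) (H 5) (H 1) $ 3 = 0"
    using perp_comp[of "H 3" "H 5" "H 1"] sp d1c n53 aa(4) Ypos unfolding X_def Y_def by simp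
  have u3: "perp_toward (H 5) (H 1) (H 3) $ 1 = Y/d3 \<and> perp_toward (H 5) (H 1) (H 3) $ 2 = -X/d3
      \<and> perp_toward (H 5) (H 1) (H 3) $ 3 = 0"
    using perp_comp[of "H 5" "H 1" "H 3"] sp d1c n15 aa(4) Ypos unfolding X_def Y_def
    by (simp add: algebra_simps)
  have C11: "H 1 $ 1 = 0" using sp unfolding X_def Y_def by (simp add: midpoint_def ez algebra_simps)
  have C12: "H 1 $ 2 = 0" using sp unfolding X_def Y_def by (simp add: midpoint_def ez algebra_simps)
  have C13: "H 1 $ 3 = 0" using sp unfolding X_def Y_def by (simp add: midpoint_def ez algebra_simps)
  have C21: "H 2 $ 1 = d1/2" using H2 u1 sp d1c unfolding X_def Y_def by (simp add: midpoint_def ez algebra_simps)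
  have C22: "H 2 $ 2 = sqrt (4 - d1^2)*cos t1/2" using H2 u1 sp d1c unfolding X_def Y_def by (simp add: midpoint_def ez algebra_simps)
  have C23: "H 2 $ 3 = sqrt (4 - d1^2)* sin t1/2" using H2 u1 sp d1c unfolding X_def Y_def by (simp add: midpoint_def ez algebra_simps)
  have C31: "H 3 $ 1 = d1" using sp d1c unfolding X_def Y_def by (simp add: midpoint_def ez algebra_simps)
  have C32: "H 3 $ 2 = 0" using sp d1c unfolding X_def Y_def by (simp add: midpoint_def ez algebra_simps)
  have C33: "H 3 $ 3 = 0" using sp d1c unfolding X_def Y_def by (simp add: midpoint_def ez algebra_simps)
  have C41: "H 4 $ 1 = (d1+X)/2 + sqrt (4 - d2^2)/2*cos t2*(-Y/d2)" using H4 u2 sp d1c unfolding X_def Y_def by (simp add: midpoint_def ez algebra_simps)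
  have C42: "H 4 $ 2 = Y/2 + sqrt (4 - d2^2)/2*cos t2*((X-d1)/d2)" using H4 u2 sp d1c unfolding X_def Y_def by (simp add: midpoint_def ez algebra_simps)
  have C43: "H 4 $ 3 = sqrt (4 - d2^2)/2* sin t2" using H4 u2 sp d1c unfolding X_def Y_def by (simp add: midpoint_def ez algebra_simps)
  have C51: "H 5 $ 1 = X" using sp unfolding X_def Y_def by (simp add: midpoint_def ez algebra_simps)
  have C52: "H 5 $ 2 = Y" using sp unfolding X_def Y_def by (simp add: midpoint_def ez algebra_simps)
  have C53: "H 5 $ 3 = 0" using sp unfolding X_def Y_def by (simp add: midpoint_def ez algebra_simps)
  have C61: "H 6 $ 1 = X/2 + sqrt (4 - d3^2)/2*cos t3*(Y/d3)" using H6 u3 sp d1c unfolding X_def Y_def by (simp add: midpoint_def ez algebra_simps)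
  have C62: "H 6 $ 2 = Y/2 + sqrt (4 - d3^2)/2*cos t3*(-X/d3)" using H6 u3 sp d1c unfolding X_def Y_def by (simp add: midpoint_def ez algebra_simps)
  have C63: "H 6 $ 3 = sqrt (4 - d3^2)/2* sin t3" using H6 u3 sp d1c unfolding X_def Y_def by (simp add: midpoint_def ez algebra_simps)
  have r1: "sqrt (4 - d1^2) > 0" using aa(4,5) by (simp add: power_strict_mono[of d1 2 2, simplified])
  have r2: "sqrt (4 - d2^2) > 0" using aa(6,7) by (simp add: power_strict_mono[of d2 2 2, simplified])
  have r3: "sqrt (4 - d3^2) > 0" using aa(8,9) by (simp add: power_strict_mono[of d3 2 2, simplified])
  have dt_f1: "det4 (H 1) (H 3) (H 4) (H 6) = dx (0,0,0) (d1,0,0) ((d1+X)/2 + sqrt (4 - d2^2)/2*cos t2*(-Y/d2), Y/2 + sqrt (4 - d2^2)/2*cos t2*((X-d1)/d2), sqrt (4 - d2^2)/2* sin t2) (X/2 + sqrt (4 - d3^2)/2*cos t3*(Y/d3), Y/2 + sqrt (4 - d3^2)/2*cos t3*(-X/d3), sqrt (4 - d3^2)/2* sin t3)"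
    by (simp only: det4_dx C11 C12 C13 C21 C22 C23 C31 C32 C33 C41 C42 C43 C51 C52 C53 C61 C62 C63)
  have q_f1: "0 < d2 * sqrt (4 - d2^2) * sin t2 * (d3*d - (d1^2 - d2^2 + d3^2) * sqrt (4 - d3^2) * cos t3) - d3 * sqrt (4 - d3^2) * sin t3 * (d2*d - (d1^2 + d2^2 - d3^2) * sqrt (4 - d2^2) * cos t2)"
  proof (rule pos_of_eq)
    show "(d2 * sqrt (4 - d2^2) * sin t2 * (d3*d - (d1^2 - d2^2 + d3^2) * sqrt (4 - d3^2) * cos t3) - d3 * sqrt (4 - d3^2) * sin t3 * (d2*d - (d1^2 + d2^2 - d3^2) * sqrt (4 - d2^2) * cos t2)) * 1 = (-8*d2*d3) * det4 (H 1) (H 3) (H 4) (H 6)"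
      unfolding dt_f1 by (rule f1_id[OF dY Xc d2c d3c aa(4) aa(6) aa(8)])
    show "0 < (1::real)" using r1 r2 r3 aa by simp
    show "0 < (-8*d2*d3) * det4 (H 1) (H 3) (H 4) (H 6)"
    proof (rule mult_neg_neg)
      show "(-8*d2*d3) < 0" using aa(4) aa(6) aa(8) by simp
      show "det4 (H 1) (H 3) (H 4) (H 6) < 0" using S by simp
    qed
  qed
  have dt_g1: "det4 (H 1) (H 4) (H 5) (H 6) = dx (0,0,0) ((d1+X)/2 + sqrt (4 - d2^2)/2*cos t2*(-Y/d2), Y/2 + sqrt (4 - d2^2)/2*cos t2*((X-d1)/d2), sqrt (4 - d2^2)/2* sin t2) (X,Y,0) (X/2 + sqrt (4 - d3^2)/2*cos t3*(Y/d3), Y/2 + sqrt (4 - d3^2)/2*cos t3*(-X/d3), sqrt (4 - d3^2)/2* sin t3)"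
    by (simp only: det4_dx C11 C12 C13 C21 C22 C23 C31 C32 C33 C41 C42 C43 C51 C52 C53 C61 C62 C63)
  have q_g1: "0 < sqrt (4 - d2^2) * ((- (d1^2) + d2^2 + d3^2) / (2*d2*d3) * cos t2 * sin t3 + sin t2 * cos t3) - d * sin t3 / (2*d3)"
  proof (rule pos_of_eq)
    show "(sqrt (4 - d2^2) * ((- (d1^2) + d2^2 + d3^2) / (2*d2*d3) * cos t2 * sin t3 + sin t2 * cos t3) - d * sin t3 / (2*d3)) * (d3 * sqrt (4 - d3^2)) = (-4) * det4 (H 1) (H 4) (H 5) (H 6)"
      unfolding dt_g1 by (rule g1_id[OF dY Xc d2c d3c aa(4) aa(6) aa(8)])
    show "0 < (d3 * sqrt (4 - d3^2))" using r1 r2 r3 aa by simp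
    show "0 < (-4) * det4 (H 1) (H 4) (H 5) (H 6)"
    proof (rule mult_neg_neg)
      show "(-4::real) < 0" using aa(4) aa(6) aa(8) by simp
      show "det4 (H 1) (H 4) (H 5) (H 6) < 0" using S by simp
    qed
  qed
  have dt_h1: "det4 (H 3) (H 4) (H 5) (H 6) = dx (d1,0,0) ((d1+X)/2 + sqrt (4 - d2^2)/2*cos t2*(-Y/d2), Y/2 + sqrt (4 - d2^2)/2*cos t2*((X-d1)/d2), sqrt (4 - d2^2)/2* sin t2) (X,Y,0) (X/2 + sqrt (4 - d3^2)/2*cos t3*(Y/d3), Y/2 + sqrt (4 - d3^2)/2*cos t3*(-X/d3), sqrt (4 - d3^2)/2* sin t3)"
    by (simp only: det4_dx C11 C12 C13 C21 C22 C23 C31 C32 C33 C41 C42 C43 C51 C52 C53 C61 C62 C63)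
  have q_h1: "0 < sqrt (4 - d3^2) * ((- (d1^2) + d2^2 + d3^2) / (2*d2*d3) * cos t3 * sin t2 + sin t3 * cos t2) - d * sin t2 / (2*d2)"
  proof (rule pos_of_eq)
    show "(sqrt (4 - d3^2) * ((- (d1^2) + d2^2 + d3^2) / (2*d2*d3) * cos t3 * sin t2 + sin t3 * cos t2) - d * sin t2 / (2*d2)) * (d2 * sqrt (4 - d2^2)) = (-4) * det4 (H 3) (H 4) (H 5) (H 6)"
      unfolding dt_h1 by (rule h1_id[OF dY Xc d2c d3c aa(4) aa(6) aa(8)])
    show "0 < (d2 * sqrt (4 - d2^2))" using r1 r2 r3 aa by simp
    show "0 < (-4) * det4 (H 3) (H 4) (H 5) (H 6)"
    proof (rule mult_neg_neg)
      show "(-4::real) < 0" using aa(4) aa(6) aa(8) by simp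
      show "det4 (H 3) (H 4) (H 5) (H 6) < 0" using S by simp
    qed
  qed
  have dt_f2: "det4 (H 2) (H 3) (H 5) (H 6) = dx (d1/2, sqrt (4 - d1^2)*cos t1/2, sqrt (4 - d1^2)* sin t1/2) (d1,0,0) (X,Y,0) (X/2 + sqrt (4 - d3^2)/2*cos t3*(Y/d3), Y/2 + sqrt (4 - d3^2)/2*cos t3*(-X/d3), sqrt (4 - d3^2)/2* sin t3)"
    by (simp only: det4_dx C11 C12 C13 C21 C22 C23 C31 C32 C33 C41 C42 C43 C51 C52 C53 C61 C62 C63)
  have q_f2: "0 < d3 * sqrt (4 - d3^2) * sin t3 * (d1*d - (d1^2 + d2^2 - d3^2) * sqrt (4 - d1^2) * cos t1) - d1 * sqrt (4 - d1^2) * sin t1 * (d3*d - (- (d1^2) + d2^2 + d3^2) * sqrt (4 - d3^2) * cos t3)"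
  proof (rule pos_of_eq)
    show "(d3 * sqrt (4 - d3^2) * sin t3 * (d1*d - (d1^2 + d2^2 - d3^2) * sqrt (4 - d1^2) * cos t1) - d1 * sqrt (4 - d1^2) * sin t1 * (d3*d - (- (d1^2) + d2^2 + d3^2) * sqrt (4 - d3^2) * cos t3)) * 1 = (8*d1*d3) * det4 (H 2) (H 3) (H 5) (H 6)"
      unfolding dt_f2 by (rule f2_id[OF dY Xc d2c d3c aa(4) aa(6) aa(8)])
    show "0 < (1::real)" using r1 r2 r3 aa by simp
    show "0 < (8*d1*d3) * det4 (H 2) (H 3) (H 5) (H 6)"
    proof (rule mult_pos_pos)
      show "(8*d1*d3) > 0" using aa(4) aa(6) aa(8) by simp
      show "det4 (H 2) (H 3) (H 5) (H 6) > 0" using S by simp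
    qed
  qed
  have dt_g2: "det4 (H 1) (H 2) (H 3) (H 6) = dx (0,0,0) (d1/2, sqrt (4 - d1^2)*cos t1/2, sqrt (4 - d1^2)* sin t1/2) (d1,0,0) (X/2 + sqrt (4 - d3^2)/2*cos t3*(Y/d3), Y/2 + sqrt (4 - d3^2)/2*cos t3*(-X/d3), sqrt (4 - d3^2)/2* sin t3)"
    by (simp only: det4_dx C11 C12 C13 C21 C22 C23 C31 C32 C33 C41 C42 C43 C51 C52 C53 C61 C62 C63)
  have q_g2: "0 < sqrt (4 - d3^2) * ((d1^2 - d2^2 + d3^2) / (2*d1*d3) * cos t3 * sin t1 + sin t3 * cos t1) - d * sin t1 / (2*d1)"
  proof (rule pos_of_eq)
    show "(sqrt (4 - d3^2) * ((d1^2 - d2^2 + d3^2) / (2*d1*d3) * cos t3 * sin t1 + sin t3 * cos t1) - d * sin t1 / (2*d1)) * (d1 * sqrt (4 - d1^2)) = (-4) * det4 (H 1) (H 2) (H 3) (H 6)"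
      unfolding dt_g2 by (rule g2_id[OF dY Xc d2c d3c aa(4) aa(6) aa(8)])
    show "0 < (d1 * sqrt (4 - d1^2))" using r1 r2 r3 aa by simp
    show "0 < (-4) * det4 (H 1) (H 2) (H 3) (H 6)"
    proof (rule mult_neg_neg)
      show "(-4::real) < 0" using aa(4) aa(6) aa(8) by simp
      show "det4 (H 1) (H 2) (H 3) (H 6) < 0" using S by simp
    qed
  qed
  have dt_h2: "det4 (H 1) (H 2) (H 5) (H 6) = dx (0,0,0) (d1/2, sqrt (4 - d1^2)*cos t1/2, sqrt (4 - d1^2)* sin t1/2) (X,Y,0) (X/2 + sqrt (4 - d3^2)/2*cos t3*(Y/d3), Y/2 + sqrt (4 - d3^2)/2*cos t3*(-X/d3), sqrt (4 - d3^2)/2* sin t3)"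
    by (simp only: det4_dx C11 C12 C13 C21 C22 C23 C31 C32 C33 C41 C42 C43 C51 C52 C53 C61 C62 C63)
  have q_h2: "0 < sqrt (4 - d1^2) * ((d1^2 - d2^2 + d3^2) / (2*d1*d3) * cos t1 * sin t3 + sin t1 * cos t3) - d * sin t3 / (2*d3)"
  proof (rule pos_of_eq)
    show "(sqrt (4 - d1^2) * ((d1^2 - d2^2 + d3^2) / (2*d1*d3) * cos t1 * sin t3 + sin t1 * cos t3) - d * sin t3 / (2*d3)) * (d3 * sqrt (4 - d3^2)) = (-4) * det4 (H 1) (H 2) (H 5) (H 6)"
      unfolding dt_h2 by (rule h2_id[OF dY Xc d2c d3c aa(4) aa(6) aa(8)])
    show "0 < (d3 * sqrt (4 - d3^2))" using r1 r2 r3 aa by simp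
    show "0 < (-4) * det4 (H 1) (H 2) (H 5) (H 6)"
    proof (rule mult_neg_neg)
      show "(-4::real) < 0" using aa(4) aa(6) aa(8) by simp
      show "det4 (H 1) (H 2) (H 5) (H 6) < 0" using S by simp
    qed
  qed
  have dt_f3: "det4 (H 1) (H 2) (H 4) (H 5) = dx (0,0,0) (d1/2, sqrt (4 - d1^2)*cos t1/2, sqrt (4 - d1^2)* sin t1/2) ((d1+X)/2 + sqrt (4 - d2^2)/2*cos t2*(-Y/d2), Y/2 + sqrt (4 - d2^2)/2*cos t2*((X-d1)/d2), sqrt (4 - d2^2)/2* sin t2) (X,Y,0)"
    by (simp only: det4_dx C11 C12 C13 C21 C22 C23 C31 C32 C33 C41 C42 C43 C51 C52 C53 C61 C62 C63)
  have q_f3: "0 < d1 * sqrt (4 - d1^2) * sin t1 * (d2*d - (- (d1^2) + d2^2 + d3^2) * sqrt (4 - d2^2) * cos t2) - d2 * sqrt (4 - d2^2) * sin t2 * (d1*d - (d1^2 - d2^2 + d3^2) * sqrt (4 - d1^2) * cos t1)"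
  proof (rule pos_of_eq)
    show "(d1 * sqrt (4 - d1^2) * sin t1 * (d2*d - (- (d1^2) + d2^2 + d3^2) * sqrt (4 - d2^2) * cos t2) - d2 * sqrt (4 - d2^2) * sin t2 * (d1*d - (d1^2 - d2^2 + d3^2) * sqrt (4 - d1^2) * cos t1)) * 1 = (8*d1*d2) * det4 (H 1) (H 2) (H 4) (H 5)"
      unfolding dt_f3 by (rule f3_id[OF dY Xc d2c d3c aa(4) aa(6) aa(8)])
    show "0 < (1::real)" using r1 r2 r3 aa by simp
    show "0 < (8*d1*d2) * det4 (H 1) (H 2) (H 4) (H 5)"
    proof (rule mult_pos_pos)
      show "(8*d1*d2) > 0" using aa(4) aa(6) aa(8) by simp
      show "det4 (H 1) (H 2) (H 4) (H 5) > 0" using S by simp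
    qed
  qed
  have dt_g3: "det4 (H 2) (H 3) (H 4) (H 5) = dx (d1/2, sqrt (4 - d1^2)*cos t1/2, sqrt (4 - d1^2)* sin t1/2) (d1,0,0) ((d1+X)/2 + sqrt (4 - d2^2)/2*cos t2*(-Y/d2), Y/2 + sqrt (4 - d2^2)/2*cos t2*((X-d1)/d2), sqrt (4 - d2^2)/2* sin t2) (X,Y,0)"
    by (simp only: det4_dx C11 C12 C13 C21 C22 C23 C31 C32 C33 C41 C42 C43 C51 C52 C53 C61 C62 C63)
  have q_g3: "0 < sqrt (4 - d1^2) * ((d1^2 + d2^2 - d3^2) / (2*d1*d2) * cos t1 * sin t2 + sin t1 * cos t2) - d * sin t2 / (2*d2)"
  proof (rule pos_of_eq)
    show "(sqrt (4 - d1^2) * ((d1^2 + d2^2 - d3^2) / (2*d1*d2) * cos t1 * sin t2 + sin t1 * cos t2) - d * sin t2 / (2*d2)) * (d2 * sqrt (4 - d2^2)) = (4) * det4 (H 2) (H 3) (H 4) (H 5)"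
      unfolding dt_g3 by (rule g3_id[OF dY Xc d2c d3c aa(4) aa(6) aa(8)])
    show "0 < (d2 * sqrt (4 - d2^2))" using r1 r2 r3 aa by simp
    show "0 < (4) * det4 (H 2) (H 3) (H 4) (H 5)"
    proof (rule mult_pos_pos)
      show "(4::real) > 0" using aa(4) aa(6) aa(8) by simp
      show "det4 (H 2) (H 3) (H 4) (H 5) > 0" using S by simp
    qed
  qed
  have dt_h3: "det4 (H 1) (H 2) (H 3) (H 4) = dx (0,0,0) (d1/2, sqrt (4 - d1^2)*cos t1/2, sqrt (4 - d1^2)* sin t1/2) (d1,0,0) ((d1+X)/2 + sqrt (4 - d2^2)/2*cos t2*(-Y/d2), Y/2 + sqrt (4 - d2^2)/2*cos t2*((X-d1)/d2), sqrt (4 - d2^2)/2* sin t2)"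
    by (simp only: det4_dx C11 C12 C13 C21 C22 C23 C31 C32 C33 C41 C42 C43 C51 C52 C53 C61 C62 C63)
  have q_h3: "0 < sqrt (4 - d2^2) * ((d1^2 + d2^2 - d3^2) / (2*d1*d2) * cos t2 * sin t1 + sin t2 * cos t1) - d * sin t1 / (2*d1)"
  proof (rule pos_of_eq)
    show "(sqrt (4 - d2^2) * ((d1^2 + d2^2 - d3^2) / (2*d1*d2) * cos t2 * sin t1 + sin t2 * cos t1) - d * sin t1 / (2*d1)) * (d1 * sqrt (4 - d1^2)) = (-4) * det4 (H 1) (H 2) (H 3) (H 4)"
      unfolding dt_h3 by (rule h3_id[OF dY Xc d2c d3c aa(4) aa(6) aa(8)])
    show "0 < (d1 * sqrt (4 - d1^2))" using r1 r2 r3 aa by simp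
    show "0 < (-4) * det4 (H 1) (H 2) (H 3) (H 4)"
    proof (rule mult_neg_neg)
      show "(-4::real) < 0" using aa(4) aa(6) aa(8) by simp
      show "det4 (H 1) (H 2) (H 3) (H 4) < 0" using S by simp
    qed
  qed
  show ?thesis using q_f1 q_g1 q_h1 q_f2 q_g2 q_h2 q_f3 q_g3 q_h3 by blast
qed

end
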